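(* Let $B,D\in\widehat{\mathbb F_q^\times}$ and set $C=D^2$. Assume $D\neq\phi$ and $B\neq D$. Then for all $x\in\mathbb F_q$, $$\overline C(1-x)\,{}_2\mathbb F_1\!\left[\begin{matrix}D\phi\overline B&D\\&C\overline B\end{matrix};\frac{-4x}{(1-x)^2}\right]={}_2\mathbb F_1\!\left[\begin{matrix}B&C\\&C\overline B\end{matrix};x\right]-\delta(1-x)\frac{J(C,\overline B^2)}{J(C,\overline B)}-\delta(1+x)\frac{J(\overline B,D\phi)}{J(C,\overline B)},$$ where for $x=1$ the left-hand side is interpreted as $0$.
   Context: $\mathbb F_q$ is a finite field with $q$ elements, $q$ a power of an odd prime $p$. $\widehat{\mathbb F_q^\times}$ is the group of multiplicative characters $\chi:\mathbb F_q^\times\to\mathbb C^\times$; every character, including the trivial character $\varepsilon$, is extended to $\mathbb F_q$ by $\chi(0)=0$. $\phi$ is the quadratic character, $\overline\chi$ denotes the complex-conjugate (inverse) character, and products/powers of characters are pointwise. For $x\in\mathbb F_q$, $\delta(x)=1$ if $x=0$ and $0$ otherwise. Jacobi sum: $J(A,B)=\sum_{x\in\mathbb F_q}A(x)B(1-x)$. Period function: ${}_2\mathbb P_1\!\left[\begin{matrix}A&B\\&C\end{matrix};\lambda\right]=\sum_{y\in\mathbb F_q}B(y)\,\overline BC(1-y)\,\overline A(1-\lambda y)$; normalized function ${}_2\mathbb F_1\!\left[\begin{matrix}A&B\\&C\end{matrix};\lambda\right]=\frac{1}{J(B,C\overline B)}\,{}_2\mathbb P_1\!\left[\begin{matrix}A&B\\&C\end{matrix};\lambda\right]$.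 *)

theory Defs
  imports Complex_Main
begin

text \<open>Finite fields are modelled by a type of class {field, finite}; a multiplicative
character is a function to the complex numbers that is multiplicative on the
nonzero elements, sends 1 to 1, and is extended by 0 at 0.\<close>

definition mult_char :: "('a::{field,finite} \<Rightarrow> complex) \<Rightarrow> bool" where
  "mult_char \<chi> \<longleftrightarrow> \<chi> 0 = 0 \<and> \<chi> 1 = 1 \<and>
     (\<forall>x y. x \<noteq> 0 \<longrightarrow> y \<noteq> 0 \<longrightarrow> \<chi> (x * y) = \<chi> x * \<chi> y)"

definition triv_char :: "'a::{field,finite} \<Rightarrow> complex" where
  "triv_char x = (if x = 0 then 0 else 1)"

definition quad_char :: "'a::{field,finite} \<Rightarrow> complex" where
  "quad_char x = (if x = 0 then 0 else if (\<exists>y. y ^ 2 = x) then 1 else -1)"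

definition char_conj :: "('a \<Rightarrow> complex) \<Rightarrow> 'a \<Rightarrow> complex" where
  "char_conj \<chi> x = cnj (\<chi> x)"

definition char_mult :: "('a \<Rightarrow> complex) \<Rightarrow> ('a \<Rightarrow> complex) \<Rightarrow> 'a \<Rightarrow> complex" where
  "char_mult A B x = A x * B x"

definition kdelta :: "'a::zero \<Rightarrow> complex" where
  "kdelta x = (if x = 0 then 1 else 0)"

definition jacobi :: "('a::{field,finite} \<Rightarrow> complex) \<Rightarrow> ('a \<Rightarrow> complex) \<Rightarrow> complex" where
  "jacobi A B = (\<Sum>x\<in>UNIV. A x * B (1 - x))"

definition P21 :: "('a::{field,finite} \<Rightarrow> complex) \<Rightarrow> ('a \<Rightarrow> complex) \<Rightarrow> ('a \<Rightarrow> complex) \<Rightarrow> 'a \<Rightarrow> complex" where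
  "P21 A B C t = (\<Sum>y\<in>UNIV. B y * char_mult (char_conj B) C (1 - y) * char_conj A (1 - t * y))"

definition F21 :: "('a::{field,finite} \<Rightarrow> complex) \<Rightarrow> ('a \<Rightarrow> complex) \<Rightarrow> ('a \<Rightarrow> complex) \<Rightarrow> 'a \<Rightarrow> complex" where
  "F21 A B C t = P21 A B C t / jacobi B (char_mult C (char_conj B))"

end

theory Submission
  imports Defs
begin

lemma two_nz:
  assumes "odd CHAR('a::{field,finite})" shows "(2::'a) \<noteq> 0"
proof
  assume "(2::'a) = 0"
  hence "(of_nat 2::'a) = 0" by simp
  hence "CHAR('a) dvd 2" by (simp only: of_nat_eq_0_iff_char_dvd)
  hence "CHAR('a) \<le> 2" by (simp add: dvd_imp_le)
  moreover have "CHAR('a) \<noteq> 0" using assms odd_pos by fastforce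
  moreover have "CHAR('a) \<noteq> 1" using CHAR_not_1[where 'a='a] by simp
  moreover have "CHAR('a) \<noteq> 2" using assms by auto
  ultimately show False by linarith
qed

lemma pow_card_minus1:
  fixes x :: "'a::{field,finite}"
  assumes "x \<noteq> 0" shows "x ^ (card (UNIV::'a set) - 1) = 1"
proof -
  let ?U = "UNIV - {0::'a}"
  have cardU: "card ?U = card (UNIV::'a set) - 1" by (simp add: card_Diff_singleton)
  have bij: "bij_betw (\<lambda>y. x * y) ?U ?U"
    by (rule bij_betw_byWitness[where f'="\<lambda>y. inverse x * y"]) (auto simp: assms)
  have "prod (\<lambda>y. y) ?U = prod (\<lambda>y. x * y) ?U"
    using prod.reindex_bij_betw[OF bij, of "\<lambda>y. y"] by simp
  also have "\<dots> = x ^ card ?U * prod (\<lambda>y. y) ?U" by (simp add: prod.distrib)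
  finally have "x ^ card ?U * prod (\<lambda>y. y) ?U = 1 * prod (\<lambda>y. y) ?U" by simp
  moreover have "prod (\<lambda>y. y) ?U \<noteq> 0" by simp
  ultimately show ?thesis using cardU by (metis mult_right_cancel)
qed

section \<open>Characters\<close>

lemma mc_0: "mult_char \<chi> \<Longrightarrow> \<chi> 0 = 0" by (simp add: mult_char_def)
lemma mc_1: "mult_char \<chi> \<Longrightarrow> \<chi> 1 = 1" by (simp add: mult_char_def)

lemma mc_mult: "mult_char \<chi> \<Longrightarrow> \<chi> (x * y) = \<chi> x * \<chi> y"
  unfolding mult_char_def by (cases "x = 0 \<or> y = 0") auto

lemma mc_nz:
  assumes "mult_char \<chi>" "x \<noteq> 0" shows "\<chi> x \<noteq> 0"
proof
  assume "\<chi> x = 0"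
  have "\<chi> (x * inverse x) = \<chi> x * \<chi> (inverse x)" by (rule mc_mult[OF assms(1)])
  with assms \<open>\<chi> x = 0\<close> show False by (simp add: mc_1)
qed

lemma mc_power: "mult_char \<chi> \<Longrightarrow> \<chi> (x ^ n) = \<chi> x ^ n"
  by (induction n) (auto simp: mc_1 mc_mult)

lemma mc_norm:
  fixes \<chi> :: "'a::{field,finite} \<Rightarrow> complex"
  assumes "mult_char \<chi>" "x \<noteq> 0" shows "norm (\<chi> x) = 1"
proof -
  have "\<chi> x ^ (card (UNIV::'a set) - 1) = 1"
    using mc_power[OF assms(1)] pow_card_minus1[OF assms(2)] mc_1[OF assms(1)] by metis
  hence "norm (\<chi> x) ^ (card (UNIV::'a set) - 1) = 1" by (metis norm_one norm_power)
  moreover have "card (UNIV::'a set) - 1 > 0"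
  proof -
    have "{0::'a,1} \<subseteq> UNIV" by simp
    hence "card {0::'a,1} \<le> card (UNIV::'a set)" by (intro card_mono) auto
    thus ?thesis by simp
  qed
  ultimately show ?thesis using power_eq_imp_eq_base[of "norm (\<chi> x)" _ 1] by simp
qed

lemma mc_cnj_mult:
  assumes "mult_char \<chi>" "x \<noteq> 0" shows "cnj (\<chi> x) * \<chi> x = 1"
proof -
  have "\<chi> x * cnj (\<chi> x) = complex_of_real ((norm (\<chi> x))\<^sup>2)" by (rule complex_norm_square[symmetric])
  thus ?thesis using mc_norm[OF assms] by (simp add: mult.commute)
qed

lemma mc_cnj_inv:
  assumes "mult_char \<chi>" "x \<noteq> 0" shows "cnj (\<chi> x) = inverse (\<chi> x)"
  using mc_cnj_mult[OF assms] mc_nz[OF assms] by (simp add: field_simps)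

lemma mc_inverse:
  assumes "mult_char \<chi>" shows "\<chi> (inverse x) = cnj (\<chi> x)"
proof (cases "x = 0")
  case True thus ?thesis using mc_0[OF assms] by simp
next
  case False
  have "\<chi> (x * inverse x) = \<chi> x * \<chi> (inverse x)" by (rule mc_mult[OF assms])
  hence "\<chi> x * \<chi> (inverse x) = 1" using False mc_1[OF assms] by simp
  thus ?thesis using mc_cnj_mult[OF assms False] by (metis mult.commute mult_left_cancel mc_nz[OF assms False])
qed

lemma mc_divide:
  assumes "mult_char \<chi>" shows "\<chi> (x / y) = \<chi> x * cnj (\<chi> y)"
  by (simp add: divide_inverse mc_mult[OF assms] mc_inverse[OF assms])

lemma mc_conj: "mult_char \<chi> \<Longrightarrow> mult_char (\<lambda>x. cnj (\<chi> x))"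
  unfolding mult_char_def by auto

lemma mc_prod: "mult_char A \<Longrightarrow> mult_char B \<Longrightarrow> mult_char (\<lambda>x. A x * B x)"
  unfolding mult_char_def by auto

lemma mc_triv: "mult_char (triv_char :: 'a::{field,finite} \<Rightarrow> complex)"
  unfolding mult_char_def triv_char_def by auto

lemma mc_neg1:
  assumes "mult_char \<chi>" shows "\<chi> (-1) * \<chi> (-1) = 1"
  using mc_mult[OF assms, of "-1" "-1"] mc_1[OF assms] by simp

lemma mc_neg1_cnj:
  assumes "mult_char \<chi>" shows "cnj (\<chi> (-1)) = \<chi> (-1)"
proof -
  have "cnj (\<chi> (-1)) * \<chi> (-1) = 1" by (rule mc_cnj_mult[OF assms]) simp
  thus ?thesis using mc_neg1[OF assms] by (metis mult_cancel_right mult_zero_left zero_neq_one)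
qed

lemma mc_neg:
  assumes "mult_char \<chi>" shows "\<chi> (- x) = \<chi> (-1) * \<chi> x"
  using mc_mult[OF assms, of "-1" x] by simp

lemma mc_sq:
  assumes "mult_char \<chi>" shows "\<chi> (x * x) = \<chi> x * \<chi> x"
  using mc_mult[OF assms] .

lemma mc_cnj_self:
  assumes "mult_char \<chi>" shows "\<chi> x * cnj (\<chi> x) = triv_char x"
  using mc_cnj_mult[OF assms, of x] mc_0[OF assms] by (auto simp: triv_char_def mult.commute)

lemma mc_triv_iff:
  assumes "mult_char \<chi>" "\<chi> \<noteq> triv_char" shows "\<exists>a. a \<noteq> 0 \<and> \<chi> a \<noteq> 1"
proof -
  from assms(2) obtain a where "\<chi> a \<noteq> triv_char a" by auto
  thus ?thesis using mc_0[OF assms(1)] by (auto simp: triv_char_def split: if_splits)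
qed

lemma sum_reindex_mult:
  fixes f :: "'a::{field,finite} \<Rightarrow> 'b::comm_monoid_add"
  assumes "a \<noteq> 0" shows "(\<Sum>x\<in>UNIV. f (a * x)) = (\<Sum>x\<in>UNIV. f x)"
proof -
  have "bij (\<lambda>x. a * x)" by (rule bij_betw_byWitness[where f'="\<lambda>y. inverse a * y"]) (auto simp: assms)
  thus ?thesis by (rule sum.reindex_bij_betw)
qed

lemma sum_reindex_affine:
  fixes f :: "'a::{field,finite} \<Rightarrow> 'b::comm_monoid_add"
  assumes "a \<noteq> 0" shows "(\<Sum>x\<in>UNIV. f (a * x + b)) = (\<Sum>x\<in>UNIV. f x)"
proof -
  have "bij (\<lambda>x. a * x + b)" by (rule bij_betw_byWitness[where f'="\<lambda>y. inverse a * (y - b)"]) (auto simp: assms mult.assoc[symmetric])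
  thus ?thesis by (rule sum.reindex_bij_betw)
qed

lemma sum_reindex_shift:
  fixes f :: "'a::{field,finite} \<Rightarrow> 'b::comm_monoid_add"
  shows "(\<Sum>x\<in>UNIV. f (x + b)) = (\<Sum>x\<in>UNIV. f x)"
  using sum_reindex_affine[of 1 f b] by simp

lemma sum_reindex_neg:
  fixes f :: "'a::{field,finite} \<Rightarrow> 'b::comm_monoid_add"
  shows "(\<Sum>x\<in>UNIV. f (b - x)) = (\<Sum>x\<in>UNIV. f x)"
  using sum_reindex_affine[of "-1" f b] by simp

lemma mc_sum_zero:
  fixes \<chi> :: "'a::{field,finite} \<Rightarrow> complex"
  assumes "mult_char \<chi>" "\<chi> \<noteq> triv_char" shows "(\<Sum>x\<in>UNIV. \<chi> x) = 0"
proof -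
  obtain a where a: "a \<noteq> 0" "\<chi> a \<noteq> 1" using mc_triv_iff[OF assms] by blast
  have "(\<Sum>x\<in>UNIV. \<chi> x) = (\<Sum>x\<in>UNIV. \<chi> (a * x))" by (rule sum_reindex_mult[OF a(1), symmetric])
  also have "\<dots> = \<chi> a * (\<Sum>x\<in>UNIV. \<chi> x)" by (simp add: mc_mult[OF assms(1)] sum_distrib_left)
  finally have "(1 - \<chi> a) * (\<Sum>x\<in>UNIV. \<chi> x) = 0" by (simp add: algebra_simps)
  thus ?thesis using a(2) by simp
qed

lemma mc_eqI:
  assumes "mult_char A" "mult_char B" "\<And>x. x \<noteq> 0 \<Longrightarrow> A x = B x" shows "A = B"
proof
  fix x show "A x = B x" using assms(3) mc_0[OF assms(1)] mc_0[OF assms(2)] by (cases "x = 0") auto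
qed

lemma mc_ne_triv:
  assumes "mult_char D" "mult_char B" "B \<noteq> D"
  shows "(\<lambda>x. D x * cnj (B x)) \<noteq> triv_char"
proof
  assume h: "(\<lambda>x. D x * cnj (B x)) = triv_char"
  have "B = D"
  proof (rule mc_eqI[OF assms(2,1)])
    fix x :: 'a assume x: "x \<noteq> 0"
    have "D x * cnj (B x) = 1" using fun_cong[OF h, of x] x by (simp add: triv_char_def)
    hence "D x * cnj (B x) * B x = B x" by simp
    thus "B x = D x" using mc_cnj_mult[OF assms(2) x] by (simp add: mult.assoc)
  qed
  thus False using assms(3) by simp
qed

section \<open>Squares and the quadratic character\<close>

lemma sq_eq_iff:
  fixes s r :: "'a::field"
  shows "s^2 = r^2 \<longleftrightarrow> s = r \<or> s = - r"
proof -
  have "s^2 - r^2 = (s - r) * (s + r)" by (simp add: power2_eq_square algebra_simps)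
  hence "s^2 = r^2 \<longleftrightarrow> (s - r) * (s + r) = 0" by (metis eq_iff_diff_eq_0)
  also have "\<dots> \<longleftrightarrow> s = r \<or> s = - r" by (simp add: eq_neg_iff_add_eq_0)
  finally show ?thesis .
qed

lemma neg_ne_self:
  fixes r :: "'a::{field,finite}"
  assumes "odd CHAR('a)" "r \<noteq> 0" shows "r \<noteq> - r"
proof
  assume h: "r = - r"
  have "r + r = r + (- r)" by (subst h) (rule refl)
  hence "2 * r = 0" by (simp only: mult_2 add.right_inverse)
  thus False using two_nz[OF assms(1)] assms(2) by simp
qed

lemma sqrt_set:
  fixes w :: "'a::{field,finite}"
  assumes "r^2 = w"
  shows "{s. s^2 = w} = {r, - r}"
  using sq_eq_iff[of _ r] assms by auto

lemma card_sqrt: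
  fixes w :: "'a::{field,finite}"
  assumes "odd CHAR('a)"
  shows "card {s. s^2 = w} = (if w = 0 then 1 else if (\<exists>y. y^2 = w) then 2 else 0)"
proof (cases "\<exists>y. y^2 = w")
  case True
  then obtain r where r: "r^2 = w" by blast
  have "card {r, -r} = (if r = 0 then 1 else 2)" using neg_ne_self[OF assms] by auto
  thus ?thesis using sqrt_set[OF r] r True by auto
next
  case False
  hence "{s. s^2 = w} = {}" by auto
  moreover have "w \<noteq> 0" using False by (metis power_zero_numeral)
  ultimately show ?thesis using False by simp
qed

lemma card_sqrt_complex:
  fixes w :: "'a::{field,finite}"
  assumes "odd CHAR('a)"
  shows "of_nat (card {s. s^2 = w}) = 1 + quad_char w"
  using card_sqrt[OF assms, of w] by (auto simp: quad_char_def)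

lemma quad_char_sq: "x \<noteq> 0 \<Longrightarrow> quad_char (x^2) = 1"
  by (auto simp: quad_char_def)

lemma quad_char_sq': "x \<noteq> 0 \<Longrightarrow> quad_char (x * x) = 1"
  using quad_char_sq[of x] by (simp add: power2_eq_square)

lemma quad_char_cnj: "cnj (quad_char x) = quad_char x"
  by (simp add: quad_char_def)

lemma quad_char_vals: "x \<noteq> 0 \<Longrightarrow> quad_char x = 1 \<or> quad_char x = -1"
  by (simp add: quad_char_def)

lemma quad_char_sqr: "x \<noteq> 0 \<Longrightarrow> quad_char x * quad_char x = 1"
  by (auto simp: quad_char_def)

lemma card_squares:
  fixes dummy :: "'a::{field,finite}"
  assumes "odd CHAR('a)"
  shows "card {w::'a. w \<noteq> 0 \<and> (\<exists>y. y^2 = w)} = card {w::'a. w \<noteq> 0 \<and> \<not>(\<exists>y. y^2 = w)}"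
proof -
  let ?N = "UNIV - {0::'a}"
  let ?S = "{w::'a. w \<noteq> 0 \<and> (\<exists>y. y^2 = w)}"
  let ?T = "{w::'a. w \<noteq> 0 \<and> \<not>(\<exists>y. y^2 = w)}"
  have sub: "(\<lambda>x. x^2) ` ?N \<subseteq> ?S" by auto
  have "(\<Sum>w\<in>?S. card {x \<in> ?N. x^2 = w}) = card ?N"
    using sum.group[OF finite finite sub, of "\<lambda>_. 1::nat"] by (simp only: card_eq_sum)
  moreover have "card {x \<in> ?N. x^2 = w} = 2" if "w \<in> ?S" for w
  proof -
    have "{x \<in> ?N. x^2 = w} = {x. x^2 = w}" using that by auto
    thus ?thesis using card_sqrt[OF assms, of w] that by auto
  qed
  ultimately have "card ?N = 2 * card ?S" by simp
  moreover have "card ?N = card ?S + card ?T"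
  proof -
    have "?N = ?S \<union> ?T" "?S \<inter> ?T = {}" by auto
    thus ?thesis by (simp add: card_Un_disjoint)
  qed
  ultimately show ?thesis by simp
qed

lemma nonsq_mult_nonsq:
  fixes n m :: "'a::{field,finite}"
  assumes "odd CHAR('a)" "n \<noteq> 0" "\<not>(\<exists>y. y^2 = n)" "m \<noteq> 0" "\<not>(\<exists>y. y^2 = m)"
  shows "\<exists>y. y^2 = n * m"
proof -
  let ?S = "{w::'a. w \<noteq> 0 \<and> (\<exists>y. y^2 = w)}"
  let ?T = "{w::'a. w \<noteq> 0 \<and> \<not>(\<exists>y. y^2 = w)}"
  have sub: "(\<lambda>s. n * s) ` ?S \<subseteq> ?T"
  proof
    fix z assume "z \<in> (\<lambda>s. n * s) ` ?S"
    then obtain s where s1: "z = n * s" "s \<in> ?S" by blast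
    then obtain y where s2: "s \<noteq> 0" "y^2 = s" by blast
    have y0: "y \<noteq> 0" using s2 by auto
    have "\<not>(\<exists>x. x^2 = z)"
    proof
      assume "\<exists>x. x^2 = z"
      then obtain x where x: "x^2 = z" by blast
      have "(x / y)^2 = x^2 / y^2" by (simp add: power_divide)
      also have "\<dots> = n * y^2 / y^2" using x s1(1) s2(2) by simp
      also have "\<dots> = n" using y0 by simp
      finally show False using assms(3) by blast
    qed
    moreover have "z \<noteq> 0" using s1(1) s2(1) assms(2) by simp
    ultimately show "z \<in> ?T" by blast
  qed
  have "inj_on (\<lambda>s. n * s) ?S" using assms(2) by (auto simp: inj_on_def)
  hence "card ((\<lambda>s. n * s) ` ?S) = card ?T" using card_squares[OF assms(1)] by (simp add: card_image)
  hence eq: "(\<lambda>s. n * s) ` ?S = ?T" using sub by (intro card_subset_eq) auto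
  have "m \<in> ?T" using assms by blast
  hence "m \<in> (\<lambda>s. n * s) ` ?S" using eq by simp
  then obtain s where s: "m = n * s" "s \<in> ?S" by blast
  then obtain y where y: "y^2 = s" by blast
  have "(n * y)^2 = n * m" using s(1) y by (simp add: power2_eq_square)
  thus ?thesis by blast
qed

lemma quad_char_mult:
  fixes x y :: "'a::{field,finite}"
  assumes "odd CHAR('a)"
  shows "quad_char (x * y) = quad_char x * quad_char y"
proof (cases "x = 0 \<or> y = 0")
  case True thus ?thesis by (auto simp: quad_char_def)
next
  case False
  hence nz: "x \<noteq> 0" "y \<noteq> 0" by auto
  show ?thesis
  proof (cases "\<exists>a. a^2 = x")
    case xs: True
    then obtain a where a: "a^2 = x" by blast
    show ?thesis
    proof (cases "\<exists>b. b^2 = y")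
      case True
      then obtain b where "b^2 = y" by blast
      hence "(a*b)^2 = x*y" using a by (simp add: power_mult_distrib)
      thus ?thesis using nz xs True by (auto simp: quad_char_def)
    next
      case ys: False
      have "\<not>(\<exists>c. c^2 = x*y)"
      proof
        assume "\<exists>c. c^2 = x*y"
        then obtain c where "c^2 = x*y" by blast
        hence "(c/a)^2 = y" using a nz by (auto simp: power_divide)
        thus False using ys by blast
      qed
      thus ?thesis using nz xs ys by (auto simp: quad_char_def)
    qed
  next
    case xs: False
    show ?thesis
    proof (cases "\<exists>b. b^2 = y")
      case True
      then obtain b where b: "b^2 = y" by blast
      have "\<not>(\<exists>c. c^2 = x*y)"
      proof
        assume "\<exists>c. c^2 = x*y"
        then obtain c where "c^2 = x*y" by blast
        hence "(c/b)^2 = x" using b nz by (auto simp: power_divide)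
        thus False using xs by blast
      qed
      thus ?thesis using nz xs True by (auto simp: quad_char_def)
    next
      case ys: False
      have "\<exists>c. c^2 = x*y" by (rule nonsq_mult_nonsq[OF assms nz(1) xs nz(2) ys])
      thus ?thesis using nz xs ys by (auto simp: quad_char_def)
    qed
  qed
qed

lemma mc_quad: "odd CHAR('a) \<Longrightarrow> mult_char (quad_char :: 'a::{field,finite} \<Rightarrow> complex)"
proof -
  assume a: "odd CHAR('a)"
  have "quad_char (1::'a) = 1" unfolding quad_char_def by (metis one_neq_zero power_one)
  moreover have "quad_char (0::'a) = 0" by (simp add: quad_char_def)
  ultimately show ?thesis unfolding mult_char_def using quad_char_mult[OF a] by blast
qed

lemma sum_quad:
  fixes g :: "'a::{field,finite} \<Rightarrow> complex"
  assumes "odd CHAR('a)"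
  shows "(\<Sum>w\<in>UNIV. quad_char w * g w) = (\<Sum>r\<in>UNIV. g (r^2)) - (\<Sum>w\<in>UNIV. g w)"
proof -
  have "(\<Sum>r\<in>UNIV. g (r^2)) = (\<Sum>w\<in>UNIV. (\<Sum>r\<in>{r. r^2 = w}. g (r^2)))"
    using sum.group[of UNIV UNIV "\<lambda>r. r^2" "\<lambda>r. g (r^2)"] by simp
  also have "\<dots> = (\<Sum>w\<in>UNIV. of_nat (card {r. r^2 = w}) * g w)"
    by (intro sum.cong refl) simp
  also have "\<dots> = (\<Sum>w\<in>UNIV. (1 + quad_char w) * g w)"
    by (simp add: card_sqrt_complex[OF assms])
  also have "\<dots> = (\<Sum>w\<in>UNIV. g w) + (\<Sum>w\<in>UNIV. quad_char w * g w)"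
    by (simp add: distrib_right sum.distrib)
  finally show ?thesis by simp
qed

section \<open>Jacobi sums\<close>

lemma card_ge3:
  assumes "odd CHAR('a::{field,finite})" shows "card (UNIV::'a set) \<ge> 3"
proof -
  have "(1::'a) \<noteq> -1" using neg_ne_self[OF assms, of 1] by simp
  hence "card {0::'a, 1, -1} = 3" by auto
  moreover have "card {0::'a, 1, -1} \<le> card (UNIV::'a set)" by (rule card_mono) auto
  ultimately show ?thesis by simp
qed

lemma jacobi_sym: "jacobi A B = jacobi B A"
  unfolding jacobi_def
  using sum_reindex_neg[of "\<lambda>x. A x * B (1 - x)" 1] by (simp add: mult.commute)

lemma conv_sum:
  fixes A B :: "'a::{field,finite} \<Rightarrow> complex"
  assumes "mult_char A" "mult_char B" "w \<noteq> 0"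
  shows "(\<Sum>z\<in>UNIV. A z * B (w - z)) = A w * B w * jacobi A B"
proof -
  have "(\<Sum>z\<in>UNIV. A z * B (w - z)) = (\<Sum>z\<in>UNIV. A (w * z) * B (w - w * z))"
    by (rule sum_reindex_mult[OF assms(3), symmetric])
  also have "\<dots> = (\<Sum>z\<in>UNIV. A w * B w * (A z * B (1 - z)))"
  proof (intro sum.cong refl)
    fix z
    have "w - w * z = w * (1 - z)" by (simp add: algebra_simps)
    thus "A (w * z) * B (w - w * z) = A w * B w * (A z * B (1 - z))"
      by (simp add: mc_mult[OF assms(1)] mc_mult[OF assms(2)])
  qed
  also have "\<dots> = A w * B w * jacobi A B" by (simp add: jacobi_def sum_distrib_left)
  finally show ?thesis .
qed

lemma conv_sum0:
  fixes A B :: "'a::{field,finite} \<Rightarrow> complex"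
  assumes "mult_char A" "mult_char B" "(\<lambda>x. A x * B x) \<noteq> triv_char"
  shows "(\<Sum>z\<in>UNIV. A z * B (- z)) = 0"
proof -
  have "(\<Sum>z\<in>UNIV. A z * B (- z)) = (\<Sum>z\<in>UNIV. B (-1) * (A z * B z))"
  proof (intro sum.cong refl)
    fix z :: 'a
    have "B (- z) = B (-1) * B z" using mc_mult[OF assms(2), of "-1" z] by simp
    thus "A z * B (- z) = B (-1) * (A z * B z)" by simp
  qed
  also have "\<dots> = B (-1) * (\<Sum>z\<in>UNIV. A z * B z)" by (simp add: sum_distrib_left)
  also have "(\<Sum>z\<in>UNIV. A z * B z) = 0" by (rule mc_sum_zero[OF mc_prod[OF assms(1,2)] assms(3)])
  finally show ?thesis by simp
qed

lemma jacobi_assoc: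
  fixes A B E :: "'a::{field,finite} \<Rightarrow> complex"
  assumes "mult_char A" "mult_char B" "mult_char E"
    and "(\<lambda>x. A x * B x) \<noteq> triv_char" "(\<lambda>x. B x * E x) \<noteq> triv_char"
  shows "jacobi A B * jacobi (\<lambda>x. A x * B x) E = jacobi A (\<lambda>x. B x * E x) * jacobi B E"
proof -
  let ?T = "\<Sum>x\<in>UNIV. \<Sum>y\<in>UNIV. A x * B y * E (1 - x - y)"
  have "?T = (\<Sum>x\<in>UNIV. \<Sum>s\<in>UNIV. A x * B (s - x) * E (1 - s))"
  proof (rule sum.cong[OF refl])
    fix x show "(\<Sum>y\<in>UNIV. A x * B y * E (1 - x - y)) = (\<Sum>s\<in>UNIV. A x * B (s - x) * E (1 - s))"
      using sum_reindex_shift[of "\<lambda>y. A x * B y * E (1 - x - y)" "- x"] by (simp add: algebra_simps)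
  qed
  also have "\<dots> = (\<Sum>s\<in>UNIV. E (1 - s) * (\<Sum>x\<in>UNIV. A x * B (s - x)))"
    by (subst sum.swap) (simp add: sum_distrib_left algebra_simps)
  also have "\<dots> = (\<Sum>s\<in>UNIV. E (1 - s) * (A s * B s * jacobi A B))"
  proof (intro sum.cong refl)
    fix s :: 'a
    show "E (1 - s) * (\<Sum>x\<in>UNIV. A x * B (s - x)) = E (1 - s) * (A s * B s * jacobi A B)"
    proof (cases "s = 0")
      case True
      thus ?thesis using conv_sum0[OF assms(1,2,4)] mc_0[OF assms(1)] by simp
    next
      case False thus ?thesis using conv_sum[OF assms(1,2) False] by simp
    qed
  qed
  also have "\<dots> = jacobi A B * jacobi (\<lambda>x. A x * B x) E"
    by (simp add: jacobi_def sum_distrib_left algebra_simps)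
  finally have 1: "?T = jacobi A B * jacobi (\<lambda>x. A x * B x) E" .
  have "?T = (\<Sum>x\<in>UNIV. A x * (\<Sum>y\<in>UNIV. B y * E ((1 - x) - y)))"
    by (simp add: sum_distrib_left algebra_simps)
  also have "\<dots> = (\<Sum>x\<in>UNIV. A x * (B (1 - x) * E (1 - x) * jacobi B E))"
  proof (intro sum.cong refl)
    fix x :: 'a
    show "A x * (\<Sum>y\<in>UNIV. B y * E (1 - x - y)) = A x * (B (1 - x) * E (1 - x) * jacobi B E)"
    proof (cases "x = 1")
      case True
      thus ?thesis using conv_sum0[OF assms(2,3,5)] mc_0[OF assms(2)] by simp
    next
      case False
      hence "1 - x \<noteq> 0" by simp
      thus ?thesis using conv_sum[OF assms(2,3)] by simp
    qed
  qed
  also have "\<dots> = (\<Sum>x\<in>UNIV. A x * (B (1 - x) * E (1 - x))) * jacobi B E"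
    by (simp add: sum_distrib_right mult.assoc)
  also have "\<dots> = jacobi A (\<lambda>x. B x * E x) * jacobi B E" by (simp add: jacobi_def)
  finally show ?thesis using 1 by simp
qed

lemma jacobi_dup:
  fixes E :: "'a::{field,finite} \<Rightarrow> complex"
  assumes odd: "odd CHAR('a)" and "mult_char E" "E \<noteq> triv_char"
  shows "jacobi quad_char E = E 4 * jacobi E E"
proof -
  have two: "(2::'a) \<noteq> 0" by (rule two_nz[OF odd])
  have four: "(4::'a) \<noteq> 0"
  proof -
    have e: "(4::'a) = 2 * 2" by simp
    show ?thesis using two by (subst e) (simp only: mult_eq_0_iff, simp)
  qed
  have "jacobi E E = (\<Sum>x\<in>UNIV. E ((1 - (2*x - 1)^2) / 4))"
  proof (unfold jacobi_def, intro sum.cong refl)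
    fix x :: 'a
    have "1 - (2*x - 1)^2 = 4 * (x * (1 - x))" by (simp add: power2_eq_square algebra_simps)
    hence h: "(1 - (2*x - 1)^2) / 4 = x * (1 - x)" using four by simp
    show "E x * E (1 - x) = E ((1 - (2 * x - 1)\<^sup>2) / 4)" by (subst h) (rule mc_mult[OF assms(2), symmetric])
  qed
  also have "\<dots> = (\<Sum>s\<in>UNIV. E ((1 - s^2) / 4))"
    using sum_reindex_affine[OF two, of "\<lambda>s. E ((1 - s^2) / 4)" "-1"] by simp
  also have "\<dots> = cnj (E 4) * (\<Sum>s\<in>UNIV. E (1 - s^2))"
    by (simp add: mc_divide[OF assms(2)] sum_distrib_left mult.commute)
  also have "(\<Sum>s\<in>UNIV. E (1 - s^2)) = (\<Sum>w\<in>UNIV. quad_char w * E (1 - w)) + (\<Sum>w\<in>UNIV. E (1 - w))"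
    using sum_quad[OF odd, of "\<lambda>w. E (1 - w)"] by simp
  also have "(\<Sum>w\<in>UNIV. E (1 - w)) = 0"
    using sum_reindex_neg[of E 1] mc_sum_zero[OF assms(2,3)] by simp
  finally have "jacobi E E = cnj (E 4) * jacobi quad_char E" by (simp add: jacobi_def)
  moreover have "E 4 * cnj (E 4) = 1"
    using mc_cnj_mult[OF assms(2) four] by (simp add: mult.commute)
  ultimately show ?thesis by (metis mult.assoc mult_1)
qed

lemma sum_remove1:
  fixes f :: "'a::{field,finite} \<Rightarrow> complex"
  shows "(\<Sum>x\<in>UNIV. f x) = (\<Sum>x\<in>UNIV - {a}. f x) + f a"
  by (simp add: sum.remove[of UNIV a] add.commute)

lemma sum_triv: "(\<Sum>x\<in>UNIV. triv_char (x::'a::{field,finite})) = of_nat (card (UNIV::'a set)) - 1"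
proof -
  have "(\<Sum>x\<in>UNIV. triv_char (x::'a)) = (\<Sum>x\<in>UNIV - {0::'a}. triv_char x) + triv_char (0::'a)"
    using sum_remove1[of triv_char 0] by simp
  also have "(\<Sum>x\<in>UNIV - {0::'a}. triv_char x) = (\<Sum>x\<in>UNIV - {0::'a}. 1)"
    by (rule sum.cong) (auto simp: triv_char_def)
  moreover have "card (UNIV::'a set) \<ge> 1" using finite_UNIV[where 'a='a] card_gt_0_iff[of "UNIV::'a set"] by simp
  ultimately show ?thesis by (simp add: triv_char_def card_Diff_singleton of_nat_diff)
qed

lemma jacobi_inv:
  fixes A B :: "'a::{field,finite} \<Rightarrow> complex"
  assumes "mult_char A" "mult_char B"
  shows "jacobi A B = A (-1) * jacobi A (\<lambda>x. cnj (A x * B x))"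
proof -
  let ?U = "UNIV - {1::'a}"
  let ?f = "\<lambda>y::'a. y / (y - 1)"
  have fU: "?f y \<in> ?U" if "y \<in> ?U" for y
  proof -
    have "y - 1 \<noteq> 0" using that by auto
    hence "?f y - 1 = 1 / (y - 1)" by (simp add: field_simps)
    thus ?thesis using \<open>y - 1 \<noteq> 0\<close> by auto
  qed
  have ff: "?f (?f y) = y" if "y \<in> ?U" for y
  proof -
    have "y - 1 \<noteq> 0" using that by auto
    hence "?f y - 1 = 1 / (y - 1)" by (simp add: field_simps)
    thus ?thesis using \<open>y - 1 \<noteq> 0\<close> by (simp add: field_simps)
  qed
  have bij: "bij_betw ?f ?U ?U"
    by (rule bij_betw_byWitness[where f'="?f"]) (use fU ff in auto)
  have "jacobi A B = (\<Sum>x\<in>?U. A x * B (1 - x))"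
    unfolding jacobi_def using sum_remove1[of "\<lambda>x. A x * B (1 - x)" 1] mc_0[OF assms(2)] by simp
  also have "\<dots> = (\<Sum>y\<in>?U. A (?f y) * B (1 - ?f y))"
    using sum.reindex_bij_betw[OF bij, of "\<lambda>x. A x * B (1 - x)"] by simp
  also have "\<dots> = (\<Sum>y\<in>?U. A (-1) * (A y * cnj (A (1 - y) * B (1 - y))))"
  proof (rule sum.cong[OF refl])
    fix y assume y: "y \<in> ?U"
    have y1: "1 - y \<noteq> 0" using y by auto
    have e1: "?f y = y * inverse (y - 1)" by (simp add: divide_inverse)
    have e3: "A (y - 1) = A (-1) * A (1 - y)" using mc_mult[OF assms(1), of "-1" "1 - y"] by simp
    have e2: "1 - ?f y = inverse (1 - y)" using y1 by (simp add: field_simps)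
    have "A (?f y) = A y * cnj (A (-1)) * cnj (A (1 - y))"
      unfolding e1 by (simp add: mc_mult[OF assms(1)] mc_inverse[OF assms(1)] e3)
    moreover have "B (1 - ?f y) = cnj (B (1 - y))" unfolding e2 by (rule mc_inverse[OF assms(2)])
    ultimately show "A (?f y) * B (1 - ?f y) = A (-1) * (A y * cnj (A (1 - y) * B (1 - y)))"
      by (simp add: mc_neg1_cnj[OF assms(1)])
  qed
  also have "\<dots> = A (-1) * (\<Sum>y\<in>UNIV. A y * cnj (A (1 - y) * B (1 - y)))"
    using sum_remove1[of "\<lambda>y. A y * cnj (A (1 - y) * B (1 - y))" 1] mc_0[OF assms(1)]
    by (simp add: sum_distrib_left)
  finally show ?thesis by (simp add: jacobi_def)
qed


lemma mobius_bij:
  fixes t :: "'a::{field,finite}"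
  assumes "t \<noteq> 1"
  shows "bij_betw (\<lambda>y. (1 - t * y) / (1 - y)) (UNIV - {0, 1}) (UNIV - {1, t})"
proof (rule bij_betw_byWitness[where f'="\<lambda>w. (1 - w) / (t - w)"])
  have tm: "t - 1 \<noteq> 0" using assms by simp
  show "\<forall>y\<in>UNIV - {0, 1}. (1 - (1 - t * y) / (1 - y)) / (t - (1 - t * y) / (1 - y)) = y"
  proof
    fix y assume y: "y \<in> UNIV - {0::'a, 1}"
    hence y1: "1 - y \<noteq> 0" by auto
    have a: "1 - (1 - t * y) / (1 - y) = (t - 1) * y / (1 - y)" using y1 by (simp add: field_simps)
    have b: "t - (1 - t * y) / (1 - y) = (t - 1) / (1 - y)" using y1 by (simp add: field_simps)
    have c: "((t - 1) * y / (1 - y)) / ((t - 1) / (1 - y)) = ((t - 1) * y) / (t - 1)"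
      using y1 by simp
    show "(1 - (1 - t * y) / (1 - y)) / (t - (1 - t * y) / (1 - y)) = y"
      unfolding a b c using tm by simp
  qed
  show "\<forall>w\<in>UNIV - {1, t}. (1 - t * ((1 - w) / (t - w))) / (1 - (1 - w) / (t - w)) = w"
  proof
    fix w assume w: "w \<in> UNIV - {1, t}"
    hence w1: "t - w \<noteq> 0" by auto
    have a: "1 - t * ((1 - w) / (t - w)) = w * (t - 1) / (t - w)" using w1 by (simp add: field_simps)
    have b: "1 - (1 - w) / (t - w) = (t - 1) / (t - w)" using w1 by (simp add: field_simps)
    have c: "(w * (t - 1) / (t - w)) / ((t - 1) / (t - w)) = (w * (t - 1)) / (t - 1)"
      using w1 by simp
    show "(1 - t * ((1 - w) / (t - w))) / (1 - (1 - w) / (t - w)) = w"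
      unfolding a b c using tm by simp
  qed
  show "(\<lambda>y. (1 - t * y) / (1 - y)) ` (UNIV - {0, 1}) \<subseteq> UNIV - {1, t}"
  proof
    fix z assume "z \<in> (\<lambda>y. (1 - t * y) / (1 - y)) ` (UNIV - {0, 1})"
    then obtain y where y: "y \<noteq> 0" "y \<noteq> 1" "z = (1 - t * y) / (1 - y)" by auto
    hence y1: "1 - y \<noteq> 0" by auto
    have "z \<noteq> 1"
    proof
      assume "z = 1"
      hence "1 - t * y = 1 - y" using y(3) y1 by (simp add: field_simps)
      hence "(t - 1) * y = 0" by (simp add: algebra_simps)
      thus False using tm y(1) by simp
    qed
    moreover have "z \<noteq> t"
    proof
      assume "z = t"
      hence "1 - t * y = t * (1 - y)" using y(3) y1 by (simp add: field_simps)
      hence "t = 1" by (simp add: algebra_simps)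
      thus False using assms by simp
    qed
    ultimately show "z \<in> UNIV - {1, t}" by simp
  qed
  show "(\<lambda>w. (1 - w) / (t - w)) ` (UNIV - {1, t}) \<subseteq> UNIV - {0, 1}"
  proof
    fix z assume "z \<in> (\<lambda>w. (1 - w) / (t - w)) ` (UNIV - {1, t})"
    then obtain w where w: "w \<noteq> 1" "w \<noteq> t" "z = (1 - w) / (t - w)" by auto
    hence w1: "t - w \<noteq> 0" by auto
    have "z \<noteq> 0" using w w1 by simp
    moreover have "z \<noteq> 1"
    proof
      assume "z = 1"
      hence "1 - w = t - w" using w(3) w1 by (simp add: field_simps)
      thus False using assms by simp
    qed
    ultimately show "z \<in> UNIV - {0, 1}" by simp
  qed
qed

lemma jacobi_normsq:
  fixes A B :: "'a::{field,finite} \<Rightarrow> complex"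
  assumes "mult_char A" "mult_char B" "A \<noteq> triv_char" "B \<noteq> triv_char"
  shows "jacobi A B * cnj (jacobi A B) = of_nat (card (UNIV::'a set)) - (\<Sum>t\<in>UNIV. A t * B t)"
proof -
  let ?q = "of_nat (card (UNIV::'a set)) :: complex"
  let ?U = "UNIV - {0::'a, 1}"
  let ?G = "\<lambda>t. (\<Sum>y\<in>?U. B (1 - t * y) * cnj (B (1 - y)))"
  have "jacobi A B * cnj (jacobi A B) =
      (\<Sum>x\<in>UNIV. \<Sum>y\<in>UNIV. A x * B (1 - x) * (cnj (A y) * cnj (B (1 - y))))"
    by (simp add: jacobi_def sum_product)
  also have "\<dots> = (\<Sum>y\<in>UNIV. \<Sum>x\<in>UNIV. A x * B (1 - x) * (cnj (A y) * cnj (B (1 - y))))"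
    by (rule sum.swap)
  also have "\<dots> = (\<Sum>y\<in>?U. \<Sum>x\<in>UNIV. A x * B (1 - x) * (cnj (A y) * cnj (B (1 - y))))"
  proof (rule sum.mono_neutral_right)
    show "\<forall>y\<in>UNIV - ?U. (\<Sum>x\<in>UNIV. A x * B (1 - x) * (cnj (A y) * cnj (B (1 - y)))) = 0"
      using mc_0[OF assms(1)] mc_0[OF assms(2)] by auto
  qed auto
  also have "\<dots> = (\<Sum>y\<in>?U. \<Sum>t\<in>UNIV. A t * (B (1 - t * y) * cnj (B (1 - y))))"
  proof (rule sum.cong[OF refl])
    fix y assume y: "y \<in> ?U"
    hence y0: "y \<noteq> 0" by auto
    have "(\<Sum>x\<in>UNIV. A x * B (1 - x) * (cnj (A y) * cnj (B (1 - y)))) =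
        (\<Sum>t\<in>UNIV. A (y * t) * B (1 - y * t) * (cnj (A y) * cnj (B (1 - y))))"
      by (rule sum_reindex_mult[OF y0, symmetric])
    also have "\<dots> = (\<Sum>t\<in>UNIV. A t * (B (1 - t * y) * cnj (B (1 - y))))"
    proof (rule sum.cong[OF refl])
      fix t
      have "A (y * t) * cnj (A y) = A t" using mc_cnj_mult[OF assms(1) y0]
        by (simp add: mc_mult[OF assms(1)] mult.commute mult.left_commute)
      thus "A (y * t) * B (1 - y * t) * (cnj (A y) * cnj (B (1 - y))) = A t * (B (1 - t * y) * cnj (B (1 - y)))"
        by (simp add: mult.commute mult.left_commute)
    qed
    finally show "(\<Sum>x\<in>UNIV. A x * B (1 - x) * (cnj (A y) * cnj (B (1 - y)))) =
        (\<Sum>t\<in>UNIV. A t * (B (1 - t * y) * cnj (B (1 - y))))" .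
  qed
  also have "\<dots> = (\<Sum>t\<in>UNIV. A t * ?G t)"
    by (subst sum.swap) (simp add: sum_distrib_left)
  also have "\<dots> = (\<Sum>t\<in>UNIV. A t * ((- 1 - B t) + (if t = 1 then ?q else 0)))"
  proof (rule sum.cong[OF refl])
    fix t :: 'a
    show "A t * ?G t = A t * ((- 1 - B t) + (if t = 1 then ?q else 0))"
    proof (cases "t = 1")
      case True
      have "?G t = (\<Sum>y\<in>?U. 1)"
      proof (rule sum.cong[OF refl])
        fix y assume "y \<in> ?U"
        hence "1 - y \<noteq> 0" by auto
        thus "B (1 - t * y) * cnj (B (1 - y)) = 1" using True mc_cnj_mult[OF assms(2)] by (simp add: mult.commute)
      qed
      also have "\<dots> = ?q - 2"
      proof -
        have "card ?U = card (UNIV::'a set) - 2" by (simp add: card_Diff_subset)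
        moreover have "card (UNIV::'a set) \<ge> 2"
        proof -
          have "card {0::'a, 1} \<le> card (UNIV::'a set)" by (rule card_mono) auto
          thus ?thesis by simp
        qed
        ultimately show ?thesis by (simp add: of_nat_diff)
      qed
      finally show ?thesis using True mc_1[OF assms(2)] by simp
    next
      case False
      have "?G t = (\<Sum>y\<in>?U. B ((1 - t * y) / (1 - y)))"
        by (rule sum.cong[OF refl]) (simp add: mc_divide[OF assms(2)])
      also have "\<dots> = (\<Sum>w\<in>UNIV - {1, t}. B w)"
        using sum.reindex_bij_betw[OF mobius_bij[OF False], of B] .
      also have "\<dots> = (\<Sum>w\<in>UNIV. B w) - B 1 - B t"
      proof -
        have "(\<Sum>w\<in>UNIV. B w) = (\<Sum>w\<in>UNIV - {1, t}. B w) + (\<Sum>w\<in>{1, t}. B w)"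
          by (metis add.commute sum.subset_diff subset_UNIV finite)
        thus ?thesis using False by simp
      qed
      also have "\<dots> = - 1 - B t" using mc_sum_zero[OF assms(2,4)] mc_1[OF assms(2)] by simp
      finally show ?thesis using False by simp
    qed
  qed
  also have "\<dots> = - (\<Sum>t\<in>UNIV. A t) - (\<Sum>t\<in>UNIV. A t * B t) + A 1 * ?q"
  proof -
    have "(\<Sum>t\<in>UNIV. A t * ((- 1 - B t) + (if t = 1 then ?q else 0))) =
        (\<Sum>t\<in>UNIV. - A t - A t * B t + (if t = 1 then A 1 * ?q else 0))"
      by (rule sum.cong[OF refl]) (auto simp: algebra_simps)
    also have "\<dots> = - (\<Sum>t\<in>UNIV. A t) - (\<Sum>t\<in>UNIV. A t * B t) + A 1 * ?q"
      by (simp add: sum.distrib sum_subtractf sum_negf)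
    finally show ?thesis .
  qed
  also have "\<dots> = ?q - (\<Sum>t\<in>UNIV. A t * B t)"
    using mc_sum_zero[OF assms(1,3)] mc_1[OF assms(1)] by simp
  finally show ?thesis .
qed

lemma jacobi_nz:
  fixes A B :: "'a::{field,finite} \<Rightarrow> complex"
  assumes odd: "odd CHAR('a)" and "mult_char A" "mult_char B" "A \<noteq> triv_char"
  shows "jacobi A B \<noteq> 0"
proof (cases "B = triv_char")
  case True
  have "jacobi A B = (\<Sum>x\<in>UNIV. A x * triv_char (1 - x))" using True by (simp add: jacobi_def)
  also have "\<dots> = (\<Sum>x\<in>UNIV. A x) - A 1"
  proof -
    have "(\<Sum>x\<in>UNIV. A x * triv_char (1 - x)) = (\<Sum>x\<in>UNIV - {1}. A x * triv_char (1 - x)) + 0"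
      using sum_remove1[of "\<lambda>x. A x * triv_char (1 - x)" 1] by (simp add: triv_char_def)
    also have "(\<Sum>x\<in>UNIV - {1}. A x * triv_char (1 - x)) = (\<Sum>x\<in>UNIV - {1}. A x)"
      by (rule sum.cong) (auto simp: triv_char_def)
    also have "\<dots> = (\<Sum>x\<in>UNIV. A x) - A 1"
      using sum_remove1[of A 1] by simp
    finally show ?thesis by simp
  qed
  finally show ?thesis using mc_sum_zero[OF assms(2,4)] mc_1[OF assms(2)] by simp
next
  case False
  have ns: "jacobi A B * cnj (jacobi A B) \<noteq> 0"
  proof (cases "(\<lambda>x. A x * B x) = triv_char")
    case True
    have "(\<Sum>t\<in>UNIV. A t * B t) = (\<Sum>t\<in>UNIV. triv_char (t::'a))" by (simp only: True)
    hence "(\<Sum>t\<in>UNIV. A t * B t) = of_nat (card (UNIV::'a set)) - 1"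
      using sum_triv[where 'a='a] by simp
    thus ?thesis using jacobi_normsq[OF assms(2,3,4) False] by simp
  next
    case nt: False
    have "(\<Sum>t\<in>UNIV. A t * B t) = 0" by (rule mc_sum_zero[OF mc_prod[OF assms(2,3)] nt])
    thus ?thesis using jacobi_normsq[OF assms(2,3,4) False] by simp
  qed
  thus ?thesis by auto
qed

lemma mc_conj_ne_triv:
  assumes "mult_char D" "D \<noteq> triv_char" shows "(\<lambda>x. cnj (D x)) \<noteq> triv_char"
proof
  assume h: "(\<lambda>x. cnj (D x)) = triv_char"
  have "D = triv_char"
  proof
    fix x show "D x = triv_char x" using fun_cong[OF h, of x]
      by (metis complex_cnj_cnj complex_cnj_one complex_cnj_zero triv_char_def)
  qed
  thus False using assms(2) by simp
qed

lemma conj_dphi_eq: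
  assumes odd: "odd CHAR('a::{field,finite})" and D: "mult_char (D::'a \<Rightarrow> complex)"
  shows "(\<lambda>x. cnj (quad_char x * (cnj (D x) * quad_char x))) = D"
proof
  fix x :: 'a
  show "cnj (quad_char x * (cnj (D x) * quad_char x)) = D x"
  proof (cases "x = 0")
    case True thus ?thesis using mc_0[OF D] by (simp add: quad_char_def)
  next
    case False
    have q: "quad_char x * quad_char x = 1" by (rule quad_char_sqr[OF False])
    have "cnj (quad_char x * (cnj (D x) * quad_char x)) = (quad_char x * quad_char x) * D x"
      by (simp add: quad_char_cnj mult.commute mult.left_commute)
    thus ?thesis using q by simp
  qed
qed

lemma quad_neg1: "odd CHAR('a::{field,finite}) \<Longrightarrow> quad_char (-1::'a) * quad_char (-1::'a) = 1"
  using mc_neg1[OF mc_quad] by blast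

lemma jacobi_quad_dphi:
  assumes odd: "odd CHAR('a::{field,finite})" and D: "mult_char (D::'a \<Rightarrow> complex)"
  shows "jacobi quad_char (\<lambda>x. cnj (D x) * quad_char x) = quad_char (-1::'a) * jacobi quad_char D"
  using jacobi_inv[OF mc_quad[OF odd] mc_prod[OF mc_conj[OF D] mc_quad[OF odd]]]
    conj_dphi_eq[OF odd D] by (simp add: quad_char_cnj)

lemma lemH:
  fixes D :: "'a::{field,finite} \<Rightarrow> complex"
  assumes odd: "odd CHAR('a)" and D: "mult_char D" and Dn: "D \<noteq> triv_char"
  shows "(\<Sum>\<eta>\<in>UNIV. quad_char \<eta> * (cnj (D (\<eta> + k)) * quad_char (\<eta> + k))) = cnj (D k) * jacobi quad_char D"
proof (cases "k = 0")
  case True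
  have "(\<Sum>\<eta>\<in>UNIV. quad_char \<eta> * (cnj (D (\<eta> + k)) * quad_char (\<eta> + k))) = (\<Sum>\<eta>\<in>UNIV. cnj (D \<eta>))"
  proof (rule sum.cong[OF refl])
    fix \<eta> :: 'a
    show "quad_char \<eta> * (cnj (D (\<eta> + k)) * quad_char (\<eta> + k)) = cnj (D \<eta>)"
    proof (cases "\<eta> = 0")
      case True thus ?thesis using \<open>k = 0\<close> mc_0[OF D] by (simp add: quad_char_def)
    next
      case False
      thus ?thesis using \<open>k = 0\<close> quad_char_sqr[OF False] by (simp add: mult.commute mult.left_commute)
    qed
  qed
  also have "\<dots> = 0" by (rule mc_sum_zero[OF mc_conj[OF D] mc_conj_ne_triv[OF D Dn]])
  finally show ?thesis using True mc_0[OF D] by simp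
next
  case False
  have mk: "- k \<noteq> 0" using False by simp
  have "(\<Sum>\<eta>\<in>UNIV. quad_char \<eta> * (cnj (D (\<eta> + k)) * quad_char (\<eta> + k)))
      = (\<Sum>z\<in>UNIV. quad_char (- k * z) * (cnj (D (- k * z + k)) * quad_char (- k * z + k)))"
    by (rule sum_reindex_mult[OF mk, symmetric])
  also have "\<dots> = (\<Sum>z\<in>UNIV. quad_char (-1::'a) * cnj (D k) * (quad_char z * (cnj (D (1 - z)) * quad_char (1 - z))))"
  proof (rule sum.cong[OF refl])
    fix z :: 'a
    have e1: "- k * z + k = k * (1 - z)" by (simp add: algebra_simps)
    have e2: "- k * z = (-1) * (k * z)" by simp
    have q: "quad_char k * quad_char k = 1" by (rule quad_char_sqr[OF False])
    have a1: "quad_char (- k * z) = quad_char (-1::'a) * quad_char k * quad_char z"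
      using quad_char_mult[OF odd, of "-1 * k" z] quad_char_mult[OF odd, of "-1" k] by simp
    have a2: "quad_char (- k * z + k) = quad_char k * quad_char (1 - z)"
      unfolding e1 by (rule quad_char_mult[OF odd])
    have "quad_char (- k * z) * quad_char (- k * z + k) = quad_char (-1::'a) * (quad_char k * quad_char k) * quad_char z * quad_char (1 - z)"
      unfolding a1 a2 by (simp add: mult.commute mult.left_commute)
    hence "quad_char (- k * z) * quad_char (- k * z + k) = quad_char (-1::'a) * quad_char z * quad_char (1 - z)"
      using q by simp
    moreover have "cnj (D (- k * z + k)) = cnj (D k) * cnj (D (1 - z))" unfolding e1 by (simp add: mc_mult[OF D])
    ultimately show "quad_char (- k * z) * (cnj (D (- k * z + k)) * quad_char (- k * z + k))
        = quad_char (-1::'a) * cnj (D k) * (quad_char z * (cnj (D (1 - z)) * quad_char (1 - z)))"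
      by (simp add: mult.commute mult.left_commute)
  qed
  also have "\<dots> = quad_char (-1::'a) * cnj (D k) * jacobi quad_char (\<lambda>x. cnj (D x) * quad_char x)"
    by (simp add: jacobi_def sum_distrib_left)
  also have "\<dots> = (quad_char (-1::'a) * quad_char (-1::'a)) * cnj (D k) * jacobi quad_char D"
    unfolding jacobi_quad_dphi[OF odd D] by (simp add: ac_simps)
  finally show ?thesis using quad_neg1[OF odd] by simp
qed


lemma quad_roots_set:
  fixes \<eta> c d :: "'a::{field,finite}"
  assumes odd: "odd CHAR('a)" and disc: "\<eta>^2 - 4*c = d^2"
  shows "{s. s^2 - \<eta>*s + c = 0} = {(\<eta> + d)/2, (\<eta> - d)/2}"
proof -
  have two: "(2::'a) \<noteq> 0" by (rule two_nz[OF odd])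
  have four: "(4::'a) = 2 * 2" by simp
  have "s^2 - \<eta>*s + c = 0 \<longleftrightarrow> (2*s - \<eta>)^2 = d^2" for s
  proof -
    have "(2*s - \<eta>)^2 = 4 * (s^2 - \<eta>*s + c) + (\<eta>^2 - 4*c)" by (simp add: power2_eq_square algebra_simps)
    hence h: "(2*s - \<eta>)^2 = 4 * (s^2 - \<eta>*s + c) + d^2" using disc by simp
    have f4: "(4::'a) \<noteq> 0" using two by (subst four) (simp only: mult_eq_0_iff, simp)
    have "(2*s - \<eta>)^2 = d^2 \<longleftrightarrow> 4 * (s^2 - \<eta>*s + c) = 0" by (simp only: h add_cancel_left_left)
    also have "\<dots> \<longleftrightarrow> s^2 - \<eta>*s + c = 0" using f4 by (simp only: mult_eq_0_iff, simp)
    finally show ?thesis by simp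
  qed
  also have "(2*s - \<eta>)^2 = d^2 \<longleftrightarrow> s = (\<eta> + d)/2 \<or> s = (\<eta> - d)/2" for s
  proof -
    have "(2*s - \<eta>)^2 = d^2 \<longleftrightarrow> 2*s - \<eta> = d \<or> 2*s - \<eta> = - d" by (rule sq_eq_iff)
    also have "\<dots> \<longleftrightarrow> s = (\<eta> + d)/2 \<or> s = (\<eta> - d)/2" using two by (auto simp: field_simps)
    finally show ?thesis .
  qed
  finally show ?thesis by auto
qed

lemma quad_char_4: "odd CHAR('a::{field,finite}) \<Longrightarrow> quad_char (4::'a) = 1"
proof -
  assume odd: "odd CHAR('a)"
  have "(4::'a) = 2^2" by simp
  thus ?thesis using quad_char_sq[OF two_nz[OF odd]] by simp
qed

lemma quad_char_eq_of_sq: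
  fixes a b :: "'a::{field,finite}"
  assumes odd: "odd CHAR('a)" and "z^2 = a * b" "z \<noteq> 0" "a \<noteq> 0"
  shows "quad_char b = quad_char a"
proof -
  have b0: "b \<noteq> 0" using assms by auto
  have "1 = quad_char (a * b)" using assms(2,3) quad_char_sq[of z] by simp
  also have "\<dots> = quad_char a * quad_char b" by (rule quad_char_mult[OF odd])
  finally have "quad_char a * (quad_char a * quad_char b) = quad_char a" by simp
  hence "(quad_char a * quad_char a) * quad_char b = quad_char a" by (simp add: mult.assoc)
  thus ?thesis using quad_char_sqr[OF assms(4)] by simp
qed

lemma fiber_sum:
  fixes \<rho> \<eta> :: "'a::{field,finite}"
  assumes odd: "odd CHAR('a)" and r0: "\<rho> \<noteq> 0"
  shows "(\<Sum>s\<in>{s. s \<noteq> 0 \<and> s + \<rho>^2/s = \<eta>}. quad_char s) = quad_char (\<eta> - 2*\<rho>) + quad_char (\<eta> + 2*\<rho>)"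
proof -
  have two: "(2::'a) \<noteq> 0" by (rule two_nz[OF odd])
  have fib: "{s. s \<noteq> 0 \<and> s + \<rho>^2/s = \<eta>} = {s. s^2 - \<eta>*s + \<rho>^2 = 0}"
  proof (intro set_eqI iffI)
    fix s assume "s \<in> {s. s \<noteq> 0 \<and> s + \<rho>^2/s = \<eta>}"
    hence s: "s \<noteq> 0" "s + \<rho>^2/s = \<eta>" by auto
    hence "s * (s + \<rho>^2/s) = s * \<eta>" by simp
    hence "s^2 + \<rho>^2 = s * \<eta>" using s(1) by (simp add: power2_eq_square distrib_left)
    thus "s \<in> {s. s^2 - \<eta>*s + \<rho>^2 = 0}" by (simp add: algebra_simps)
  next
    fix s assume "s \<in> {s. s^2 - \<eta>*s + \<rho>^2 = 0}"
    hence s: "s^2 - \<eta>*s + \<rho>^2 = 0" by simp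
    have s0: "s \<noteq> 0" using s r0 by auto
    have "\<rho>^2 = s * (\<eta> - s)" using s by (simp add: power2_eq_square algebra_simps)
    hence "\<rho>^2/s = \<eta> - s" using s0 by simp
    thus "s \<in> {s. s \<noteq> 0 \<and> s + \<rho>^2/s = \<eta>}" using s0 by simp
  qed
  have key: "quad_char s = quad_char (\<eta> - 2*\<rho>) \<and> quad_char s = quad_char (\<eta> + 2*\<rho>)"
    if s: "s^2 - \<eta>*s + \<rho>^2 = 0" and ne: "\<eta> \<noteq> 2*\<rho>" "\<eta> \<noteq> - 2*\<rho>" for s
  proof
    have s0: "s \<noteq> 0" using s r0 by auto
    have e1: "(s - \<rho>)^2 = s * (\<eta> - 2*\<rho>)" using s by (simp add: power2_eq_square algebra_simps)
    have e2: "(s + \<rho>)^2 = s * (\<eta> + 2*\<rho>)" using s by (simp add: power2_eq_square algebra_simps)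
    have n1: "s - \<rho> \<noteq> 0"
    proof
      assume "s - \<rho> = 0"
      hence "s * (\<eta> - 2*\<rho>) = 0" using e1 by simp
      thus False using s0 ne(1) by simp
    qed
    have n2: "s + \<rho> \<noteq> 0"
    proof
      assume "s + \<rho> = 0"
      hence "s * (\<eta> + 2*\<rho>) = 0" using e2 by simp
      hence "\<eta> + 2 * \<rho> = 0" using s0 by simp
      hence "\<eta> = - 2 * \<rho>" by (simp add: eq_neg_iff_add_eq_0)
      thus False using ne(2) by simp
    qed
    show "quad_char s = quad_char (\<eta> - 2*\<rho>)"
      using quad_char_eq_of_sq[OF odd e1 n1 s0] by simp
    show "quad_char s = quad_char (\<eta> + 2*\<rho>)"
      using quad_char_eq_of_sq[OF odd e2 n2 s0] by simp
  qed
  show ?thesis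
  proof (cases "\<eta> = 2*\<rho>")
    case True
    have "\<eta>^2 - 4*\<rho>^2 = 0^2" using True by (simp add: power2_eq_square algebra_simps)
    hence R0: "{s. s^2 - \<eta>*s + \<rho>^2 = 0} = {(\<eta> + 0)/2, (\<eta> - 0)/2}" by (rule quad_roots_set[OF odd])
    have "(\<eta> + 0)/2 = \<rho>" "(\<eta> - 0)/2 = \<rho>" using True two by simp_all
    hence "{s. s^2 - \<eta>*s + \<rho>^2 = 0} = {\<rho>}" using R0 by simp
    moreover have "quad_char (4 * \<rho>) = quad_char \<rho>"
      using quad_char_mult[OF odd, of 4 \<rho>] quad_char_4[OF odd] by simp
    moreover have "\<eta> + 2*\<rho> = 4 * \<rho>" using True by simp
    ultimately show ?thesis using fib True by (simp add: quad_char_def[of 0])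
  next
    case F1: False
    show ?thesis
    proof (cases "\<eta> = - 2*\<rho>")
      case True
      have "\<eta>^2 - 4*\<rho>^2 = 0^2" using True by (simp add: power2_eq_square algebra_simps)
      hence R0: "{s. s^2 - \<eta>*s + \<rho>^2 = 0} = {(\<eta> + 0)/2, (\<eta> - 0)/2}" by (rule quad_roots_set[OF odd])
      have "(\<eta> + 0)/2 = - \<rho>" "(\<eta> - 0)/2 = - \<rho>" using True two by simp_all
      hence "{s. s^2 - \<eta>*s + \<rho>^2 = 0} = {- \<rho>}" using R0 by simp
      hence S: "(\<Sum>s\<in>{s. s \<noteq> 0 \<and> s + \<rho>^2/s = \<eta>}. quad_char s) = quad_char (- \<rho>)" using fib by simp
      have q4: "quad_char (4 * (- \<rho>)) = quad_char (- \<rho>)"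
        using quad_char_mult[OF odd, of 4 "- \<rho>"] quad_char_4[OF odd] by simp
      have e1: "\<eta> - 2*\<rho> = 4 * (- \<rho>)" using True by simp
      have e2: "\<eta> + 2*\<rho> = 0" using True by simp
      show ?thesis unfolding S e1 e2 q4 by (simp add: quad_char_def[of 0])
    next
      case F2: False
      have nz1: "\<eta> - 2*\<rho> \<noteq> 0" using F1 by simp
      have nz2: "\<eta> + 2*\<rho> \<noteq> 0" using F2 by (metis add.inverse_inverse eq_neg_iff_add_eq_0 minus_mult_left)
      show ?thesis
      proof (cases "quad_char (\<eta> - 2*\<rho>) = quad_char (\<eta> + 2*\<rho>)")
        case False
        have E0: "{s. s^2 - \<eta>*s + \<rho>^2 = 0} = {}"
        proof (rule equals0I)
          fix s assume "s \<in> {s. s^2 - \<eta>*s + \<rho>^2 = 0}"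
          hence "s^2 - \<eta>*s + \<rho>^2 = 0" by simp
          from key[OF this F1 F2] False show False by metis
        qed
        have "quad_char (\<eta> - 2*\<rho>) + quad_char (\<eta> + 2*\<rho>) = 0"
          using False quad_char_vals[OF nz1] quad_char_vals[OF nz2] by auto
        thus ?thesis unfolding fib E0 by simp
      next
        case True
        have "quad_char ((\<eta> - 2*\<rho>) * (\<eta> + 2*\<rho>)) = 1"
          using True quad_char_mult[OF odd] quad_char_sqr[OF nz1] by metis
        then obtain d where d: "d^2 = (\<eta> - 2*\<rho>) * (\<eta> + 2*\<rho>)"
          by (auto simp: quad_char_def split: if_splits)
        have d0: "d \<noteq> 0" using d nz1 nz2 by auto
        have "\<eta>^2 - 4*\<rho>^2 = d^2" using d by (simp add: power2_eq_square algebra_simps)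
        hence R: "{s. s^2 - \<eta>*s + \<rho>^2 = 0} = {(\<eta> + d)/2, (\<eta> - d)/2}" by (rule quad_roots_set[OF odd])
        have dist: "(\<eta> + d)/2 \<noteq> (\<eta> - d)/2"
        proof
          assume "(\<eta> + d)/2 = (\<eta> - d)/2"
          hence "\<eta> + d = \<eta> - d" using two by (metis divide_cancel_right)
          hence "d = - d" by (simp only: diff_conv_add_uminus add_left_cancel)
          thus False using neg_ne_self[OF odd d0] by blast
        qed
        have "(\<eta> + d)/2 \<in> {s. s^2 - \<eta>*s + \<rho>^2 = 0}" "(\<eta> - d)/2 \<in> {s. s^2 - \<eta>*s + \<rho>^2 = 0}"
          using R by auto
        hence m: "((\<eta> + d)/2)^2 - \<eta>*((\<eta> + d)/2) + \<rho>^2 = 0" "((\<eta> - d)/2)^2 - \<eta>*((\<eta> - d)/2) + \<rho>^2 = 0"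
          by (simp only: mem_Collect_eq)+
        have r1: "quad_char ((\<eta> + d)/2) = quad_char (\<eta> - 2*\<rho>)"
          using key[OF m(1) F1 F2] by blast
        have r2: "quad_char ((\<eta> - d)/2) = quad_char (\<eta> - 2*\<rho>)"
          using key[OF m(2) F1 F2] by blast
        show ?thesis using fib R dist r1 r2 True by simp
      qed
    qed
  qed
qed

lemma coreQ:
  fixes \<rho> :: "'a::{field,finite}" and f :: "'a \<Rightarrow> complex"
  assumes odd: "odd CHAR('a)" and r0: "\<rho> \<noteq> 0"
  shows "(\<Sum>s\<in>UNIV. quad_char s * f (s + \<rho>^2/s)) = (\<Sum>\<eta>\<in>UNIV. (quad_char (\<eta> - 2*\<rho>) + quad_char (\<eta> + 2*\<rho>)) * f \<eta>)"
proof -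
  let ?g = "\<lambda>s. s + \<rho>^2/s"
  have "(\<Sum>s\<in>UNIV. quad_char s * f (?g s)) = (\<Sum>s\<in>UNIV - {0}. quad_char s * f (?g s))"
    using sum_remove1[of "\<lambda>s. quad_char s * f (?g s)" 0] by (simp add: quad_char_def[of 0])
  also have "\<dots> = (\<Sum>\<eta>\<in>UNIV. \<Sum>s\<in>{x. x \<in> UNIV - {0} \<and> ?g x = \<eta>}. quad_char s * f (?g s))"
    by (rule sum.group[symmetric]) auto
  also have "\<dots> = (\<Sum>\<eta>\<in>UNIV. (\<Sum>s\<in>{s. s \<noteq> 0 \<and> s + \<rho>^2/s = \<eta>}. quad_char s) * f \<eta>)"
  proof (rule sum.cong[OF refl])
    fix \<eta>
    have "(\<Sum>s\<in>{x. x \<in> UNIV - {0} \<and> ?g x = \<eta>}. quad_char s * f (?g s)) = (\<Sum>s\<in>{s. s \<noteq> 0 \<and> s + \<rho>^2/s = \<eta>}. quad_char s * f \<eta>)"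
      by (rule sum.cong) auto
    thus "(\<Sum>s\<in>{x. x \<in> UNIV - {0} \<and> ?g x = \<eta>}. quad_char s * f (?g s)) = (\<Sum>s\<in>{s. s \<noteq> 0 \<and> s + \<rho>^2/s = \<eta>}. quad_char s) * f \<eta>"
      by (simp add: sum_distrib_right)
  qed
  also have "\<dots> = (\<Sum>\<eta>\<in>UNIV. (quad_char (\<eta> - 2*\<rho>) + quad_char (\<eta> + 2*\<rho>)) * f \<eta>)"
    by (simp add: fiber_sum[OF odd r0])
  finally show ?thesis .
qed

lemma sum_reindex_invol:
  fixes f :: "'a::{field,finite} \<Rightarrow> 'b::comm_monoid_add"
  assumes "c \<noteq> 0" shows "(\<Sum>s\<in>UNIV. f (c * inverse s)) = (\<Sum>s\<in>UNIV. f s)"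
proof -
  have "bij (\<lambda>s. c * inverse s)"
    by (rule bij_betw_byWitness[where f'="\<lambda>s. c * inverse s"]) (auto simp: assms)
  thus ?thesis by (rule sum.reindex_bij_betw)
qed

lemma involution_zero:
  fixes F :: "'a::{field,finite} \<Rightarrow> complex"
  assumes odd: "odd CHAR('a)" and c0: "c \<noteq> 0" and nsq: "quad_char c = -1"
  shows "(\<Sum>s\<in>UNIV. quad_char s * F (s + c / s)) = 0"
proof -
  let ?S = "\<Sum>s\<in>UNIV. quad_char s * F (s + c / s)"
  have "?S = (\<Sum>s\<in>UNIV. quad_char (c * inverse s) * F (c * inverse s + c / (c * inverse s)))"
    by (rule sum_reindex_invol[OF c0, symmetric])
  also have "\<dots> = (\<Sum>s\<in>UNIV. - (quad_char s * F (s + c / s)))"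
  proof (rule sum.cong[OF refl])
    fix s :: 'a
    show "quad_char (c * inverse s) * F (c * inverse s + c / (c * inverse s)) = - (quad_char s * F (s + c / s))"
    proof (cases "s = 0")
      case True thus ?thesis by (simp add: quad_char_def)
    next
      case False
      have "c * inverse s + c / (c * inverse s) = s + c / s" using False c0 by (simp add: field_simps)
      moreover have "quad_char (c * inverse s) = - quad_char s"
        using quad_char_mult[OF odd, of c "inverse s"] nsq mc_inverse[OF mc_quad[OF odd], of s]
        by (simp add: quad_char_cnj)
      ultimately show ?thesis by simp
    qed
  qed
  also have "\<dots> = - ?S" by (simp add: sum_negf)
  finally show ?thesis by simp
qed

lemma lemG:
  fixes D :: "'a::{field,finite} \<Rightarrow> complex" and a b :: 'a
  assumes odd: "odd CHAR('a)" and D: "mult_char D" and Dn: "D \<noteq> triv_char"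
  shows "(\<Sum>s\<in>UNIV. D s * (cnj (D ((s+a)*(s+b))) * quad_char ((s+a)*(s+b))))
       = jacobi quad_char D * (\<Sum>\<sigma>\<in>{\<sigma>. \<sigma>^2 = a*b}. cnj (D (a + b + 2*\<sigma>)))"
proof -
  define h where "h \<eta> = cnj (D (\<eta> + (a + b))) * quad_char (\<eta> + (a + b))" for \<eta>
  have step0: "(\<Sum>s\<in>UNIV. D s * (cnj (D ((s+a)*(s+b))) * quad_char ((s+a)*(s+b))))
      = (\<Sum>s\<in>UNIV. quad_char s * h (s + (a*b)/s))"
  proof (rule sum.cong[OF refl])
    fix s :: 'a
    show "D s * (cnj (D ((s+a)*(s+b))) * quad_char ((s+a)*(s+b))) = quad_char s * h (s + (a*b)/s)"
    proof (cases "s = 0")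
      case True thus ?thesis using mc_0[OF D] by (simp add: quad_char_def)
    next
      case False
      have e: "(s+a)*(s+b) = s * (s + (a*b)/s + (a + b))" using False by (simp add: field_simps)
      have "D s * cnj (D s) = 1" using mc_cnj_mult[OF D False] by (simp add: mult.commute)
      thus ?thesis unfolding e h_def
        by (simp add: mc_mult[OF D] quad_char_mult[OF odd] mult.commute mult.left_commute)
    qed
  qed
  show ?thesis
  proof (cases "a * b = 0")
    case True
    have "(\<Sum>s\<in>UNIV. quad_char s * h (s + (a*b)/s)) = (\<Sum>s\<in>UNIV. quad_char s * (cnj (D (s + (a + b))) * quad_char (s + (a + b))))"
      unfolding True h_def by simp
    also have "\<dots> = cnj (D (a + b)) * jacobi quad_char D" by (rule lemH[OF odd D Dn])
    finally have 1: "(\<Sum>s\<in>UNIV. quad_char s * h (s + (a*b)/s)) = cnj (D (a + b)) * jacobi quad_char D" .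
    have "{\<sigma>::'a. \<sigma>^2 = a*b} = {0}" using True by auto
    thus ?thesis using step0 1 by (simp add: mult.commute)
  next
    case ab0: False
    show ?thesis
    proof (cases "\<exists>\<rho>. \<rho>^2 = a * b")
      case False
      have "quad_char (a * b) = -1" using False ab0 by (simp add: quad_char_def)
      hence "(\<Sum>s\<in>UNIV. quad_char s * h (s + (a*b)/s)) = 0" by (rule involution_zero[OF odd ab0])
      moreover have "{\<sigma>::'a. \<sigma>^2 = a*b} = {}" using False by auto
      ultimately show ?thesis using step0 by simp
    next
      case True
      then obtain \<rho> where r: "\<rho>^2 = a * b" by blast
      have r0: "\<rho> \<noteq> 0" using r ab0 by auto
      have "(\<Sum>s\<in>UNIV. quad_char s * h (s + (a*b)/s))
          = (\<Sum>\<eta>\<in>UNIV. (quad_char (\<eta> - 2*\<rho>) + quad_char (\<eta> + 2*\<rho>)) * h \<eta>)"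
        using coreQ[OF odd r0, of h] r by simp
      also have "\<dots> = (\<Sum>\<eta>\<in>UNIV. quad_char (\<eta> - 2*\<rho>) * h \<eta>) + (\<Sum>\<eta>\<in>UNIV. quad_char (\<eta> + 2*\<rho>) * h \<eta>)"
        by (simp add: distrib_right sum.distrib)
      also have "(\<Sum>\<eta>\<in>UNIV. quad_char (\<eta> - 2*\<rho>) * h \<eta>) = (\<Sum>z\<in>UNIV. quad_char z * h (z + 2*\<rho>))"
        using sum_reindex_shift[of "\<lambda>\<eta>. quad_char (\<eta> - 2*\<rho>) * h \<eta>" "2*\<rho>"] by simp
      also have "\<dots> = (\<Sum>z\<in>UNIV. quad_char z * (cnj (D (z + (a + b + 2*\<rho>))) * quad_char (z + (a + b + 2*\<rho>))))"
        by (rule sum.cong[OF refl]) (simp add: h_def algebra_simps)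
      also have "\<dots> = cnj (D (a + b + 2*\<rho>)) * jacobi quad_char D"
        by (rule lemH[OF odd D Dn])
      also have "(\<Sum>\<eta>\<in>UNIV. quad_char (\<eta> + 2*\<rho>) * h \<eta>) = (\<Sum>z\<in>UNIV. quad_char z * h (z - 2*\<rho>))"
        using sum_reindex_shift[of "\<lambda>\<eta>. quad_char (\<eta> + 2*\<rho>) * h \<eta>" "- 2*\<rho>"] by simp
      also have "\<dots> = (\<Sum>z\<in>UNIV. quad_char z * (cnj (D (z + (a + b + 2*(-\<rho>)))) * quad_char (z + (a + b + 2*(-\<rho>)))))"
        by (rule sum.cong[OF refl]) (simp add: h_def algebra_simps)
      also have "\<dots> = cnj (D (a + b + 2*(-\<rho>))) * jacobi quad_char D"
        by (rule lemH[OF odd D Dn])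
      finally have 1: "(\<Sum>s\<in>UNIV. quad_char s * h (s + (a*b)/s)) =
          (cnj (D (a + b + 2*\<rho>)) + cnj (D (a + b + 2*(-\<rho>)))) * jacobi quad_char D"
        by (simp add: distrib_right)
      have S: "{\<sigma>::'a. \<sigma>^2 = a*b} = {\<rho>, -\<rho>}" using sqrt_set[OF r] .
      have "\<rho> \<noteq> -\<rho>" by (rule neg_ne_self[OF odd r0])
      hence "(\<Sum>\<sigma>\<in>{\<sigma>::'a. \<sigma>^2 = a*b}. cnj (D (a + b + 2*\<sigma>))) = cnj (D (a + b + 2*\<rho>)) + cnj (D (a + b + 2*(-\<rho>)))"
        unfolding S by simp
      thus ?thesis using step0 1 by (simp add: mult.commute)
    qed
  qed
qed

lemma sum_reindex_moeb:
  fixes f :: "'a::{field,finite} \<Rightarrow> 'b::comm_monoid_add"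
  assumes "c \<noteq> 0" shows "(\<Sum>s\<in>UNIV. f (c * inverse (s + b))) = (\<Sum>s\<in>UNIV. f s)"
proof -
  have "(\<Sum>s\<in>UNIV. f (c * inverse (s + b))) = (\<Sum>s\<in>UNIV. f (c * inverse s))"
    by (rule sum_reindex_shift)
  also have "\<dots> = (\<Sum>s\<in>UNIV. f s)" by (rule sum_reindex_invol[OF assms])
  finally show ?thesis .
qed

lemma subst_Y:
  fixes D :: "'a::{field,finite} \<Rightarrow> complex"
  assumes odd: "odd CHAR('a)" and D: "mult_char D" and a0: "\<alpha> \<noteq> 0" and bg: "\<beta> - t*\<alpha> = \<gamma>"
  shows "(\<Sum>Y\<in>UNIV. D Y * D (\<alpha> - \<beta>*Y) * (cnj (D (1 - t*Y)) * quad_char (1 - t*Y)))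
       = D \<alpha> * D \<alpha> * (\<Sum>s\<in>UNIV. D s * (cnj (D ((s+\<beta>)*(s+\<gamma>))) * quad_char ((s+\<beta>)*(s+\<gamma>))))"
proof -
  let ?F = "\<lambda>Y. D Y * D (\<alpha> - \<beta>*Y) * (cnj (D (1 - t*Y)) * quad_char (1 - t*Y))"
  have "(\<Sum>Y\<in>UNIV. ?F Y) = (\<Sum>s\<in>UNIV. ?F (\<alpha> * inverse (s + \<beta>)))"
    by (rule sum_reindex_moeb[OF a0, symmetric])
  also have "\<dots> = (\<Sum>s\<in>UNIV. D \<alpha> * D \<alpha> * (D s * (cnj (D ((s+\<beta>)*(s+\<gamma>))) * quad_char ((s+\<beta>)*(s+\<gamma>)))))"
  proof (rule sum.cong[OF refl])
    fix s
    show "?F (\<alpha> * inverse (s + \<beta>)) = D \<alpha> * D \<alpha> * (D s * (cnj (D ((s+\<beta>)*(s+\<gamma>))) * quad_char ((s+\<beta>)*(s+\<gamma>))))"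
    proof (cases "s + \<beta> = 0")
      case True thus ?thesis using mc_0[OF D] by simp
    next
      case False
      define w where "w = s + \<beta>"
      have w0: "w \<noteq> 0" using False w_def by simp
      have e1: "\<alpha> * inverse (s + \<beta>) = \<alpha> * inverse w" by (simp add: w_def)
      have e2: "\<alpha> - \<beta> * (\<alpha> * inverse w) = \<alpha> * s * inverse w" using w0 by (simp add: w_def field_simps)
      have e3: "1 - t * (\<alpha> * inverse w) = (s + \<gamma>) * inverse w" using w0 bg by (simp add: w_def field_simps)
      have e4: "(s+\<beta>)*(s+\<gamma>) = w * (s + \<gamma>)" by (simp add: w_def)
      have c1: "cnj (D w) * D w = 1" by (rule mc_cnj_mult[OF D w0])
      have qi: "quad_char (inverse w) = quad_char w" using mc_inverse[OF mc_quad[OF odd], of w] by (simp add: quad_char_cnj)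
      have "?F (\<alpha> * inverse (s + \<beta>)) =
          (D \<alpha> * D \<alpha> * (D s * (cnj (D w) * cnj (D (s + \<gamma>))) * (quad_char w * quad_char (s + \<gamma>)))) * (cnj (D w) * D w)"
        unfolding e1 e2 e3
        by (simp add: mc_mult[OF D] mc_inverse[OF D] quad_char_mult[OF odd] qi ac_simps)
      also have "\<dots> = D \<alpha> * D \<alpha> * (D s * (cnj (D ((s+\<beta>)*(s+\<gamma>))) * quad_char ((s+\<beta>)*(s+\<gamma>))))"
        unfolding c1 e4 by (simp add: mc_mult[OF D] quad_char_mult[OF odd] ac_simps)
      finally show ?thesis .
    qed
  qed
  also have "\<dots> = D \<alpha> * D \<alpha> * (\<Sum>s\<in>UNIV. D s * (cnj (D ((s+\<beta>)*(s+\<gamma>))) * quad_char ((s+\<beta>)*(s+\<gamma>))))"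
    by (simp add: sum_distrib_left)
  finally show ?thesis .
qed


lemma sig_sq:
  fixes x y m :: "'a::field"
  assumes u0: "1 - x \<noteq> 0"
  shows "((1+x)*((1+x) - 2*x*y)/(1-x)^2)^2 - (1 - m*(-4*x/(1-x)^2))*(1 - (-4*x/(1-x)^2))
       = (4*x*(1+x)^2/(1-x)^4) * ((1-y)*(1-x*y) - m)"
proof -
  have u2: "(1-x)^2 \<noteq> 0" "(1-x)^4 \<noteq> 0" using u0 by auto
  show ?thesis using u2 by (simp add: field_simps) (simp add: power2_eq_square power4_eq_xxxx algebra_simps)
qed

lemma sig_sum:
  fixes x y m :: "'a::field"
  assumes u0: "1 - x \<noteq> 0"
  shows "(1 - m*(-4*x/(1-x)^2)) + (1 - (-4*x/(1-x)^2)) + 2*((1+x)*((1+x) - 2*x*y)/(1-x)^2)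
       = 4*((1+x) - x*y)^2/(1-x)^2 + 4*x*(m - (1-y)*(1-x*y))/(1-x)^2"
proof -
  have u2: "(1-x)^2 \<noteq> 0" using u0 by auto
  show ?thesis using u2 by (simp add: field_simps) algebra
qed


lemma four_nz: "odd CHAR('a::{field,finite}) \<Longrightarrow> (4::'a) \<noteq> 0"
proof -
  assume odd: "odd CHAR('a)"
  have e: "(4::'a) = 2 * 2" by simp
  show ?thesis using two_nz[OF odd] by (subst e) (simp only: mult_eq_0_iff, simp)
qed

lemma root_bij:
  fixes x m :: "'a::{field,finite}"
  assumes odd: "odd CHAR('a)" and x0: "x \<noteq> 0" and x1: "x \<noteq> 1" and xm1: "1 + x \<noteq> 0"
  shows "bij_betw (\<lambda>y. (1+x)*((1+x) - 2*x*y)/(1-x)^2) {y. (1-y)*(1-x*y) = m}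
           {\<sigma>. \<sigma>^2 = (1 - m*(-4*x/(1-x)^2))*(1 - (-4*x/(1-x)^2))}"
proof -
  have u0: "1 - x \<noteq> 0" using x1 by simp
  have u2: "(1-x)^2 \<noteq> 0" using u0 by simp
  let ?s = "\<lambda>y. (1+x)*((1+x) - 2*x*y)/(1-x)^2"
  let ?s' = "\<lambda>\<sigma>. ((1+x) - \<sigma>*(1-x)^2/(1+x))/(2*x)"
  have c: "4*x*(1+x)^2/(1-x)^4 \<noteq> 0" using x0 xm1 u0 four_nz[OF odd] by simp
  have mem: "?s y \<in> {\<sigma>. \<sigma>^2 = (1 - m*(-4*x/(1-x)^2))*(1 - (-4*x/(1-x)^2))} \<longleftrightarrow> y \<in> {y. (1-y)*(1-x*y) = m}" for y
  proof -
    have "(?s y)^2 = (1 - m*(-4*x/(1-x)^2))*(1 - (-4*x/(1-x)^2)) \<longleftrightarrow>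
        (?s y)^2 - (1 - m*(-4*x/(1-x)^2))*(1 - (-4*x/(1-x)^2)) = 0" by (rule eq_iff_diff_eq_0)
    also have "\<dots> \<longleftrightarrow> (4*x*(1+x)^2/(1-x)^4) * ((1-y)*(1-x*y) - m) = 0" by (simp only: sig_sq[OF u0])
    also have "\<dots> \<longleftrightarrow> (1-y)*(1-x*y) - m = 0" using c by (simp only: mult_eq_0_iff) simp
    also have "\<dots> \<longleftrightarrow> (1-y)*(1-x*y) = m" by (rule eq_iff_diff_eq_0[symmetric])
    finally show ?thesis by (simp only: mem_Collect_eq)
  qed
  have two: "(2::'a) \<noteq> 0" by (rule two_nz[OF odd])
  have inv1: "?s' (?s y) = y" for y
  proof -
    have "?s y * (1-x)^2/(1+x) = (1+x) - 2*x*y" using u2 xm1 by simp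
    hence "(1+x) - ?s y * (1-x)^2/(1+x) = 2*x*y" by simp
    thus ?thesis using two x0 by simp
  qed
  have inv2: "?s (?s' \<sigma>) = \<sigma>" for \<sigma>
  proof -
    have "2*x*?s' \<sigma> = (1+x) - \<sigma>*(1-x)^2/(1+x)" using two x0 by simp
    hence "(1+x) - 2*x*?s' \<sigma> = \<sigma>*(1-x)^2/(1+x)" by simp
    hence "?s (?s' \<sigma>) = (1+x)*(\<sigma>*(1-x)^2/(1+x))/(1-x)^2" by (simp only: mult.assoc)
    thus ?thesis using u2 xm1 by simp
  qed
  show ?thesis
  proof (rule bij_betw_byWitness[where f'="?s'"])
    show "\<forall>a\<in>{y. (1-y)*(1-x*y) = m}. ?s' (?s a) = a" using inv1 by blast
    show "\<forall>a\<in>{\<sigma>. \<sigma>^2 = (1 - m*(-4*x/(1-x)^2))*(1 - (-4*x/(1-x)^2))}. ?s (?s' a) = a" using inv2 by blast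
    show "?s ` {y. (1-y)*(1-x*y) = m} \<subseteq> {\<sigma>. \<sigma>^2 = (1 - m*(-4*x/(1-x)^2))*(1 - (-4*x/(1-x)^2))}"
      using mem by blast
    show "?s' ` {\<sigma>. \<sigma>^2 = (1 - m*(-4*x/(1-x)^2))*(1 - (-4*x/(1-x)^2))} \<subseteq> {y. (1-y)*(1-x*y) = m}"
    proof
      fix y assume "y \<in> ?s' ` {\<sigma>. \<sigma>^2 = (1 - m*(-4*x/(1-x)^2))*(1 - (-4*x/(1-x)^2))}"
      then obtain \<sigma> where "\<sigma> \<in> {\<sigma>. \<sigma>^2 = (1 - m*(-4*x/(1-x)^2))*(1 - (-4*x/(1-x)^2))}" "y = ?s' \<sigma>" by blast
      hence "?s y \<in> {\<sigma>. \<sigma>^2 = (1 - m*(-4*x/(1-x)^2))*(1 - (-4*x/(1-x)^2))}" using inv2 by simp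
      thus "y \<in> {y. (1-y)*(1-x*y) = m}" using mem by blast
    qed
  qed
qed


lemma Kp1:
  fixes D :: "'a::{field,finite} \<Rightarrow> complex" and x m :: 'a
  assumes odd: "odd CHAR('a)" and D: "mult_char D" and Dn: "D \<noteq> triv_char"
    and x0: "x \<noteq> 0" and x1: "x \<noteq> 1" and xm1: "1 + x \<noteq> 0" and m0: "m \<noteq> 0" and a0: "1 - m \<noteq> 0"
  defines "t \<equiv> -4*x/(1-x)^2"
  shows "cnj (D (1-x)) * cnj (D (1-x)) * (\<Sum>Y\<in>UNIV. D Y * D ((1-m) - (1 - m*t)*Y) * (cnj (D (1 - t*Y)) * quad_char (1 - t*Y)))
       = jacobi D D * (\<Sum>y\<in>{y. (1-y)*(1-x*y) = m}. D y * D y)"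
proof -
  have u0: "1 - x \<noteq> 0" using x1 by simp
  let ?\<beta> = "1 - m*t" and ?\<gamma> = "1 - t"
  let ?s = "\<lambda>y. (1+x)*((1+x) - 2*x*y)/(1-x)^2"
  let ?Y = "{y. (1-y)*(1-x*y) = m}"
  let ?S = "{\<sigma>. \<sigma>^2 = ?\<beta> * ?\<gamma>}"
  have bg: "?\<beta> - t*(1-m) = ?\<gamma>" by (simp add: algebra_simps)
  have "(\<Sum>Y\<in>UNIV. D Y * D ((1-m) - ?\<beta>*Y) * (cnj (D (1 - t*Y)) * quad_char (1 - t*Y)))
      = D (1-m) * D (1-m) * (\<Sum>s\<in>UNIV. D s * (cnj (D ((s+?\<beta>)*(s+?\<gamma>))) * quad_char ((s+?\<beta>)*(s+?\<gamma>))))"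
    by (rule subst_Y[OF odd D a0 bg])
  also have "(\<Sum>s\<in>UNIV. D s * (cnj (D ((s+?\<beta>)*(s+?\<gamma>))) * quad_char ((s+?\<beta>)*(s+?\<gamma>))))
      = jacobi quad_char D * (\<Sum>\<sigma>\<in>?S. cnj (D (?\<beta> + ?\<gamma> + 2*\<sigma>)))"
    by (rule lemG[OF odd D Dn])
  also have "(\<Sum>\<sigma>\<in>?S. cnj (D (?\<beta> + ?\<gamma> + 2*\<sigma>))) = (\<Sum>y\<in>?Y. cnj (D (?\<beta> + ?\<gamma> + 2*?s y)))"
    using sum.reindex_bij_betw[OF root_bij[OF odd x0 x1 xm1, of m], of "\<lambda>\<sigma>. cnj (D (?\<beta> + ?\<gamma> + 2*\<sigma>))"]
    unfolding t_def by simp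
  also have "jacobi quad_char D = D 4 * jacobi D D" by (rule jacobi_dup[OF odd D Dn])
  finally have 1: "cnj (D (1-x)) * cnj (D (1-x)) * (\<Sum>Y\<in>UNIV. D Y * D ((1-m) - ?\<beta>*Y) * (cnj (D (1 - t*Y)) * quad_char (1 - t*Y)))
      = jacobi D D * (\<Sum>y\<in>?Y. cnj (D (1-x)) * cnj (D (1-x)) * (D (1-m) * D (1-m)) * D 4 * cnj (D (?\<beta> + ?\<gamma> + 2*?s y)))"
    by (simp add: sum_distrib_left ac_simps)
  have 2: "cnj (D (1-x)) * cnj (D (1-x)) * (D (1-m) * D (1-m)) * D 4 * cnj (D (?\<beta> + ?\<gamma> + 2*?s y)) = D y * D y"
    if y: "y \<in> ?Y" for y
  proof -
    have Q: "(1-y)*(1-x*y) = m" using y by simp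
    define w where "w = (1+x) - x*y"
    have al: "1 - m = y * w" using Q by (simp add: w_def algebra_simps)
    have w0: "w \<noteq> 0" using al a0 by auto
    have "?\<beta> + ?\<gamma> + 2*?s y = 4*((1+x) - x*y)^2/(1-x)^2 + 4*x*(m - (1-y)*(1-x*y))/(1-x)^2"
      unfolding t_def by (rule sig_sum[OF u0])
    hence e: "?\<beta> + ?\<gamma> + 2*?s y = 4 * (w * w) * (inverse (1-x) * inverse (1-x))"
      using Q by (simp add: w_def power2_eq_square divide_inverse ac_simps)
    have c1: "cnj (D (1-x)) * D (1-x) = 1" by (rule mc_cnj_mult[OF D u0])
    have c2: "cnj (D 4) * D 4 = 1" by (rule mc_cnj_mult[OF D four_nz[OF odd]])
    have c3: "cnj (D w) * D w = 1" by (rule mc_cnj_mult[OF D w0])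
    have "cnj (D (1-x)) * cnj (D (1-x)) * (D (1-m) * D (1-m)) * D 4 * cnj (D (?\<beta> + ?\<gamma> + 2*?s y))
        = (D y * D y) * (cnj (D (1-x)) * D (1-x)) * (cnj (D (1-x)) * D (1-x)) * (cnj (D 4) * D 4) * (cnj (D w) * D w) * (cnj (D w) * D w)"
      unfolding e al by (simp add: mc_mult[OF D] mc_inverse[OF D] ac_simps)
    also have "\<dots> = D y * D y" unfolding c1 c2 c3 by simp
    finally show ?thesis .
  qed
  show ?thesis using 1 2 by simp
qed


lemma mc_ne_quad:
  fixes D :: "'a::{field,finite} \<Rightarrow> complex"
  assumes odd: "odd CHAR('a)" and D: "mult_char D" and Dq: "D \<noteq> quad_char"
  shows "(\<lambda>z. cnj (D z) * quad_char z) \<noteq> triv_char"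
proof
  assume h: "(\<lambda>z. cnj (D z) * quad_char z) = triv_char"
  have "quad_char = D"
  proof (rule mc_eqI[OF mc_quad[OF odd] D])
    fix z :: 'a assume z: "z \<noteq> 0"
    have "cnj (D z) * quad_char z = 1" using fun_cong[OF h, of z] z by (simp add: triv_char_def)
    hence "D z * (cnj (D z) * quad_char z) = D z" by simp
    hence "(cnj (D z) * D z) * quad_char z = D z" by (simp add: ac_simps)
    thus "quad_char z = D z" using mc_cnj_mult[OF D z] by simp
  qed
  thus False using Dq by simp
qed

lemma Kp0:
  fixes D :: "'a::{field,finite} \<Rightarrow> complex" and x :: 'a
  assumes odd: "odd CHAR('a)" and D: "mult_char D" and Dn: "D \<noteq> triv_char" and Dq: "D \<noteq> quad_char"
    and x0: "x \<noteq> 0" and x1: "x \<noteq> 1" and xm1: "1 + x \<noteq> 0"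
  defines "t \<equiv> -4*x/(1-x)^2"
  shows "cnj (D (1-x)) * cnj (D (1-x)) * (\<Sum>Y\<in>UNIV. D Y * D ((1-1) - (1 - 1*t)*Y) * (cnj (D (1 - t*Y)) * quad_char (1 - t*Y)))
       = jacobi D D * (\<Sum>y\<in>{y. (1-y)*(1-x*y) = 1}. D y * D y)"
proof -
  have u0: "1 - x \<noteq> 0" using x1 by simp
  have t0: "t \<noteq> 0" using x0 u0 four_nz[OF odd] by (simp add: t_def)
  have it0: "inverse t \<noteq> 0" using t0 by simp
  define E where "E = (\<lambda>z. cnj (D z) * quad_char z)"
  define C where "C = (\<lambda>z. D z * D z)"
  have Ez: "E z = cnj (D z) * quad_char z" for z by (simp add: E_def)
  have Cz: "C z = D z * D z" for z by (simp add: C_def)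
  have E: "mult_char E" unfolding E_def by (rule mc_prod[OF mc_conj[OF D] mc_quad[OF odd]])
  have C: "mult_char C" unfolding C_def by (rule mc_prod[OF D D])
  have En: "E \<noteq> triv_char" unfolding E_def by (rule mc_ne_quad[OF odd D Dq])
  have "(\<Sum>Y\<in>UNIV. D Y * D ((1-1) - (1 - 1*t)*Y) * (cnj (D (1 - t*Y)) * quad_char (1 - t*Y)))
      = (\<Sum>Y\<in>UNIV. D (- (1 - t)) * (C Y * E (1 - t*Y)))"
  proof (rule sum.cong[OF refl])
    fix Y :: 'a
    have e: "(1-1) - (1 - 1*t)*Y = (- (1 - t)) * Y" by (simp add: algebra_simps)
    show "D Y * D ((1-1) - (1 - 1*t)*Y) * (cnj (D (1 - t*Y)) * quad_char (1 - t*Y)) = D (- (1 - t)) * (C Y * E (1 - t*Y))"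
      unfolding e mc_mult[OF D, of "- (1 - t)" Y] Ez Cz by (simp add: ac_simps)
  qed
  also have "\<dots> = D (- (1 - t)) * (\<Sum>Z\<in>UNIV. C (inverse t * Z) * E (1 - t*(inverse t * Z)))"
    using sum_reindex_mult[OF it0, of "\<lambda>Y. C Y * E (1 - t*Y)"] by (simp add: sum_distrib_left)
  also have "(\<Sum>Z\<in>UNIV. C (inverse t * Z) * E (1 - t*(inverse t * Z)))
      = (\<Sum>Z\<in>UNIV. cnj (D t) * cnj (D t) * (C Z * E (1 - Z)))"
  proof (rule sum.cong[OF refl])
    fix Z :: 'a
    have tz: "t * (inverse t * Z) = Z" using t0 by simp
    show "C (inverse t * Z) * E (1 - t*(inverse t * Z)) = cnj (D t) * cnj (D t) * (C Z * E (1 - Z))"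
      unfolding Cz tz by (simp add: mc_mult[OF D] mc_inverse[OF D] ac_simps)
  qed
  also have "\<dots> = cnj (D t) * cnj (D t) * jacobi C E"
    unfolding jacobi_def by (simp add: sum_distrib_left)
  finally have S1: "(\<Sum>Y\<in>UNIV. D Y * D ((1-1) - (1 - 1*t)*Y) * (cnj (D (1 - t*Y)) * quad_char (1 - t*Y)))
      = D (- (1 - t)) * (cnj (D t) * cnj (D t) * jacobi C E)" .
  have conjEC: "(\<lambda>z. cnj (E z * C z)) = E"
  proof
    fix z :: 'a
    show "cnj (E z * C z) = E z"
    proof (cases "z = 0")
      case True thus ?thesis using mc_0[OF D] by (simp add: Ez Cz)
    next
      case False
      have "cnj (E z * C z) = (cnj (D z) * quad_char z) * cnj (cnj (D z) * D z)"
        unfolding Ez Cz by (simp add: quad_char_cnj ac_simps)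
      thus ?thesis using mc_cnj_mult[OF D False] by (simp add: Ez)
    qed
  qed
  have J3: "jacobi C E = E (-1) * jacobi E E"
    using jacobi_sym[of C E] jacobi_inv[OF E C] conjEC by simp
  have d1: "jacobi quad_char E = E 4 * jacobi E E" by (rule jacobi_dup[OF odd E En])
  have d2: "jacobi quad_char E = quad_char (-1::'a) * jacobi quad_char D"
    unfolding E_def by (rule jacobi_quad_dphi[OF odd D])
  have d3: "jacobi quad_char D = D 4 * jacobi D D" by (rule jacobi_dup[OF odd D Dn])
  have c4: "cnj (D 4) * D 4 = 1" by (rule mc_cnj_mult[OF D four_nz[OF odd]])
  have q4: "quad_char (4::'a) = 1" by (rule quad_char_4[OF odd])
  have E4: "D 4 * E 4 = 1" using c4 q4 by (simp add: Ez mult.commute)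
  have "jacobi E E = (D 4 * E 4) * jacobi E E" using E4 by simp
  also have "\<dots> = D 4 * jacobi quad_char E" by (simp add: d1 mult.assoc)
  also have "\<dots> = D 4 * quad_char (-1::'a) * D 4 * jacobi D D" by (simp add: d2 d3 mult.assoc)
  finally have JE: "jacobi E E = D 4 * quad_char (-1::'a) * D 4 * jacobi D D" .
  have Em1: "E (-1) = D (-1) * quad_char (-1::'a)" using mc_neg1_cnj[OF D] by (simp add: Ez)
  have qq: "quad_char (-1::'a) * quad_char (-1::'a) = 1" by (rule quad_neg1[OF odd])
  have JCE: "jacobi C E = D (-1) * D 4 * D 4 * jacobi D D"
  proof -
    have "jacobi C E = D (-1) * D 4 * D 4 * jacobi D D * (quad_char (-1::'a) * quad_char (-1::'a))"
      unfolding J3 JE Em1 by (simp add: ac_simps)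
    thus ?thesis using qq by simp
  qed
  have Yset: "{y. (1-y)*(1-x*y) = 1} = {0, (1+x)/x}"
  proof (intro set_eqI iffI)
    fix y assume "y \<in> {y. (1-y)*(1-x*y) = 1}"
    hence "y * (x*y - (1+x)) = 0" by (simp add: algebra_simps)
    hence "y = 0 \<or> x*y = 1+x" by auto
    moreover have "x*y = 1+x \<Longrightarrow> y = (1+x)/x" using x0 by (simp add: eq_divide_eq ac_simps)
    ultimately show "y \<in> {0, (1+x)/x}" by auto
  next
    fix y assume "y \<in> {0, (1+x)/x}"
    hence "y = 0 \<or> y = (1+x)/x" by simp
    thus "y \<in> {y. (1-y)*(1-x*y) = 1}"
    proof
      assume "y = 0" thus ?thesis by simp
    next
      assume "y = (1+x)/x"
      hence xy: "x*y = 1 + x" using x0 by simp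
      have "(1-y)*(1-x*y) = (1-y)*(-x)" using xy by simp
      also have "\<dots> = x*y - x" by (simp add: algebra_simps)
      also have "\<dots> = 1" using xy by simp
      finally show ?thesis by simp
    qed
  qed
  have n0: "(1+x)/x \<noteq> 0" using x0 xm1 by simp
  have S5: "(\<Sum>y\<in>{y. (1-y)*(1-x*y) = 1}. D y * D y) = D ((1+x)/x) * D ((1+x)/x)"
    unfolding Yset using n0 mc_0[OF D] by simp
  have targ: "cnj (D (1-x)) * cnj (D (1-x)) * (D (- (1 - t)) * (cnj (D t) * cnj (D t))) * (D (-1) * D 4 * D 4)
      = D ((1+x)/x) * D ((1+x)/x)"
  proof -
    have u2: "(1-x)^2 \<noteq> 0" using u0 by simp
    have gam: "1 - t = (1+x)^2/(1-x)^2" unfolding t_def using u2 by (simp add: field_simps) algebra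
    have g1: "1 - t = (1+x) * (1+x) * (inverse (1-x) * inverse (1-x))"
      unfolding gam by (simp add: power2_eq_square divide_inverse ac_simps)
    have g2: "t = - (4 * x * (inverse (1-x) * inverse (1-x)))"
      by (simp add: t_def power2_eq_square divide_inverse ac_simps)
    have n1: "D (- (1 - t)) = D (-1) * D ((1+x) * (1+x) * (inverse (1-x) * inverse (1-x)))"
      unfolding g1 by (rule mc_neg[OF D])
    have n2: "D t = D (-1) * D (4 * x * (inverse (1-x) * inverse (1-x)))"
      by (subst g2) (rule mc_neg[OF D])
    have e3: "(1+x)/x = (1+x) * inverse x" by (simp add: divide_inverse)
    have c1: "cnj (D (1-x)) * D (1-x) = 1" by (rule mc_cnj_mult[OF D u0])
    have cm: "cnj (D (-1)) * D (-1) = 1" by (rule mc_cnj_mult[OF D]) simp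
    have "cnj (D (1-x)) * cnj (D (1-x)) * (D (- (1 - t)) * (cnj (D t) * cnj (D t))) * (D (-1) * D 4 * D 4)
        = D ((1+x)/x) * D ((1+x)/x) * (cnj (D (1-x)) * D (1-x)) * (cnj (D (1-x)) * D (1-x))
          * (cnj (D (1-x)) * D (1-x)) * (cnj (D (1-x)) * D (1-x)) * (cnj (D 4) * D 4) * (cnj (D 4) * D 4)
          * (cnj (D (-1)) * D (-1)) * (cnj (D (-1)) * D (-1))"
      unfolding e3 n1 n2 by (simp add: mc_mult[OF D] mc_inverse[OF D] ac_simps)
    also have "\<dots> = D ((1+x)/x) * D ((1+x)/x)" unfolding c1 c4 cm by simp
    finally show ?thesis .
  qed
  show ?thesis unfolding S1 S5 JCE using targ
    by (simp add: ac_simps)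
qed

lemma key_inner:
  fixes B D :: "'a::{field,finite} \<Rightarrow> complex" and t Y :: 'a
  assumes D: "mult_char D" and B: "mult_char B" and BD: "B \<noteq> D"
  shows "(\<Sum>Z\<in>UNIV. D Z * cnj (B (1 - Z)) * (D Y * (D (1-Y) * cnj (B (1-Y))) * (cnj (D (1 - t*Y)) * quad_char (1 - t*Y) * B (1 - t*Y))))
       = (\<Sum>m\<in>UNIV. cnj (B m) * (D Y * D ((1-m) - (1 - m*t)*Y) * (cnj (D (1 - t*Y)) * quad_char (1 - t*Y))))"
proof (cases "Y = 1")
  case True
  have "(\<Sum>m\<in>UNIV. cnj (B m) * (D Y * D ((1-m) - (1 - m*t)*Y) * (cnj (D (1 - t*Y)) * quad_char (1 - t*Y))))
      = (\<Sum>m\<in>UNIV. (D m * cnj (B m)) * (D (t - 1) * (cnj (D (1 - t)) * quad_char (1 - t))))"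
  proof (rule sum.cong[OF refl])
    fix m :: 'a
    have "(1-m) - (1 - m*t)*Y = m * (t - 1)" using True by (simp add: algebra_simps)
    thus "cnj (B m) * (D Y * D ((1-m) - (1 - m*t)*Y) * (cnj (D (1 - t*Y)) * quad_char (1 - t*Y)))
        = (D m * cnj (B m)) * (D (t - 1) * (cnj (D (1 - t)) * quad_char (1 - t)))"
      using True mc_1[OF D] by (simp add: mc_mult[OF D] ac_simps)
  qed
  also have "\<dots> = (\<Sum>m\<in>UNIV. D m * cnj (B m)) * (D (t - 1) * (cnj (D (1 - t)) * quad_char (1 - t)))"
    by (simp add: sum_distrib_right)
  also have "(\<Sum>m\<in>UNIV. D m * cnj (B m)) = 0"
    by (rule mc_sum_zero[OF mc_prod[OF D mc_conj[OF B]] mc_ne_triv[OF D B BD]])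
  finally show ?thesis using True mc_0[OF D] by simp
next
  case Y1: False
  show ?thesis
  proof (cases "1 - t*Y = 0")
    case True thus ?thesis using mc_0[OF D] by simp
  next
    case False
    define k where "k = (1 - t*Y) / (1 - Y)"
    have y1: "1 - Y \<noteq> 0" using Y1 by simp
    have k0: "- k \<noteq> 0" using False y1 by (simp add: k_def)
    have "(\<Sum>Z\<in>UNIV. D Z * cnj (B (1 - Z)) * (D Y * (D (1-Y) * cnj (B (1-Y))) * (cnj (D (1 - t*Y)) * quad_char (1 - t*Y) * B (1 - t*Y))))
        = (\<Sum>m\<in>UNIV. D ((-k)*m + 1) * cnj (B (1 - ((-k)*m + 1))) * (D Y * (D (1-Y) * cnj (B (1-Y))) * (cnj (D (1 - t*Y)) * quad_char (1 - t*Y) * B (1 - t*Y))))"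
      by (rule sum_reindex_affine[OF k0, symmetric])
    also have "\<dots> = (\<Sum>m\<in>UNIV. cnj (B m) * (D Y * D ((1-m) - (1 - m*t)*Y) * (cnj (D (1 - t*Y)) * quad_char (1 - t*Y))))"
    proof (rule sum.cong[OF refl])
      fix m :: 'a
      have e1: "1 - ((-k)*m + 1) = m * k" by simp
      have e2: "D ((-k)*m + 1) * D (1 - Y) = D ((1-m) - (1 - m*t)*Y)"
      proof -
        have "((-k)*m + 1) * (1 - Y) = (1-m) - (1 - m*t)*Y" using y1 by (simp add: k_def field_simps)
        thus ?thesis by (simp add: mc_mult[OF D, symmetric])
      qed
      have e3: "cnj (B (m * k)) * cnj (B (1 - Y)) * B (1 - t*Y) = cnj (B m)"
      proof -
        have "k * (1 - Y) = 1 - t*Y" using y1 by (simp add: k_def)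
        hence a: "m * k * (1 - Y) = m * (1 - t*Y)" by (simp add: mult.assoc)
        have "cnj (B (m * k)) * cnj (B (1 - Y)) = cnj (B (m * k * (1 - Y)))" by (simp add: mc_mult[OF B])
        also have "\<dots> = cnj (B m) * cnj (B (1 - t*Y))" unfolding a by (simp add: mc_mult[OF B])
        finally have "cnj (B (m * k)) * cnj (B (1 - Y)) = cnj (B m) * cnj (B (1 - t*Y))" .
        thus ?thesis using mc_cnj_mult[OF B False] by (simp add: ac_simps)
      qed
      show "D ((-k)*m + 1) * cnj (B (1 - ((-k)*m + 1))) * (D Y * (D (1-Y) * cnj (B (1-Y))) * (cnj (D (1 - t*Y)) * quad_char (1 - t*Y) * B (1 - t*Y)))
          = cnj (B m) * (D Y * D ((1-m) - (1 - m*t)*Y) * (cnj (D (1 - t*Y)) * quad_char (1 - t*Y)))"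
        unfolding e1 e2[symmetric] e3[symmetric] by (simp add: ac_simps)
    qed
    finally show ?thesis .
  qed
qed


lemma KEY:
  fixes B D :: "'a::{field,finite} \<Rightarrow> complex" and x :: 'a
  assumes odd: "odd CHAR('a)" and D: "mult_char D" and B: "mult_char B" and Dn: "D \<noteq> triv_char"
    and Dq: "D \<noteq> quad_char" and BD: "B \<noteq> D"
    and x0: "x \<noteq> 0" and x1: "x \<noteq> 1" and xm1: "1 + x \<noteq> 0"
  defines "t \<equiv> -4*x/(1-x)^2"
  shows "jacobi D (\<lambda>z. cnj (B z)) * (cnj (D (1-x)) * cnj (D (1-x)))
          * (\<Sum>Y\<in>UNIV. D Y * (D (1-Y) * cnj (B (1-Y))) * (cnj (D (1 - t*Y)) * quad_char (1 - t*Y) * B (1 - t*Y)))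
       = jacobi D D * (\<Sum>y\<in>UNIV. D y * D y * (cnj (B (1-y)) * cnj (B (1-x*y))))"
proof -
  let ?L = "\<lambda>Y. D Y * (D (1-Y) * cnj (B (1-Y))) * (cnj (D (1 - t*Y)) * quad_char (1 - t*Y) * B (1 - t*Y))"
  let ?W = "\<lambda>m Y. D Y * D ((1-m) - (1 - m*t)*Y) * (cnj (D (1 - t*Y)) * quad_char (1 - t*Y))"
  let ?Ys = "\<lambda>m. {y. (1-y)*(1-x*y) = m}"
  have "jacobi D (\<lambda>z. cnj (B z)) * (\<Sum>Y\<in>UNIV. ?L Y) = (\<Sum>Z\<in>UNIV. \<Sum>Y\<in>UNIV. D Z * cnj (B (1 - Z)) * ?L Y)"
    unfolding jacobi_def by (rule sum_product)
  also have "\<dots> = (\<Sum>Y\<in>UNIV. \<Sum>Z\<in>UNIV. D Z * cnj (B (1 - Z)) * ?L Y)"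
    by (rule sum.swap)
  also have "\<dots> = (\<Sum>Y\<in>UNIV. \<Sum>m\<in>UNIV. cnj (B m) * ?W m Y)"
    by (rule sum.cong[OF refl], rule key_inner[OF D B BD])
  also have "\<dots> = (\<Sum>m\<in>UNIV. cnj (B m) * (\<Sum>Y\<in>UNIV. ?W m Y))"
    by (subst sum.swap) (simp add: sum_distrib_left)
  finally have 1: "jacobi D (\<lambda>z. cnj (B z)) * (\<Sum>Y\<in>UNIV. ?L Y) = (\<Sum>m\<in>UNIV. cnj (B m) * (\<Sum>Y\<in>UNIV. ?W m Y))" .
  have 2: "cnj (D (1-x)) * cnj (D (1-x)) * (cnj (B m) * (\<Sum>Y\<in>UNIV. ?W m Y))
      = cnj (B m) * (jacobi D D * (\<Sum>y\<in>?Ys m. D y * D y))" for m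
  proof (cases "m = 0")
    case True thus ?thesis using mc_0[OF B] by simp
  next
    case m0: False
    show ?thesis
    proof (cases "m = 1")
      case True
      have "cnj (D (1-x)) * cnj (D (1-x)) * (\<Sum>Y\<in>UNIV. ?W 1 Y) = jacobi D D * (\<Sum>y\<in>?Ys 1. D y * D y)"
        unfolding t_def by (rule Kp0[OF odd D Dn Dq x0 x1 xm1])
      thus ?thesis using True by (simp add: ac_simps)
    next
      case False
      have a0: "1 - m \<noteq> 0" using False by simp
      have "cnj (D (1-x)) * cnj (D (1-x)) * (\<Sum>Y\<in>UNIV. ?W m Y) = jacobi D D * (\<Sum>y\<in>?Ys m. D y * D y)"
        unfolding t_def by (rule Kp1[OF odd D Dn x0 x1 xm1 m0 a0])
      thus ?thesis by (simp add: ac_simps)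
    qed
  qed
  have 3: "(\<Sum>y\<in>UNIV. D y * D y * (cnj (B (1-y)) * cnj (B (1-x*y))))
      = (\<Sum>m\<in>UNIV. cnj (B m) * (\<Sum>y\<in>?Ys m. D y * D y))"
  proof -
    have "(\<Sum>y\<in>UNIV. D y * D y * (cnj (B (1-y)) * cnj (B (1-x*y))))
        = (\<Sum>y\<in>UNIV. D y * D y * cnj (B ((1-y)*(1-x*y))))"
      by (simp add: mc_mult[OF B])
    also have "\<dots> = (\<Sum>m\<in>UNIV. \<Sum>y\<in>{y. y \<in> UNIV \<and> (1-y)*(1-x*y) = m}. D y * D y * cnj (B ((1-y)*(1-x*y))))"
      by (rule sum.group[symmetric]) auto
    also have "\<dots> = (\<Sum>m\<in>UNIV. cnj (B m) * (\<Sum>y\<in>?Ys m. D y * D y))"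
      by (rule sum.cong[OF refl]) (simp add: sum_distrib_left ac_simps)
    finally show ?thesis .
  qed
  have "jacobi D (\<lambda>z. cnj (B z)) * (cnj (D (1-x)) * cnj (D (1-x))) * (\<Sum>Y\<in>UNIV. ?L Y)
      = cnj (D (1-x)) * cnj (D (1-x)) * (jacobi D (\<lambda>z. cnj (B z)) * (\<Sum>Y\<in>UNIV. ?L Y))"
    by (simp only: ac_simps)
  also have "\<dots> = (\<Sum>m\<in>UNIV. cnj (D (1-x)) * cnj (D (1-x)) * (cnj (B m) * (\<Sum>Y\<in>UNIV. ?W m Y)))"
    unfolding 1 by (rule sum_distrib_left)
  also have "\<dots> = (\<Sum>m\<in>UNIV. cnj (B m) * (jacobi D D * (\<Sum>y\<in>?Ys m. D y * D y)))"
    by (rule sum.cong[OF refl], rule 2)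
  also have "\<dots> = jacobi D D * (\<Sum>m\<in>UNIV. cnj (B m) * (\<Sum>y\<in>?Ys m. D y * D y))"
    by (simp add: sum_distrib_left mult.left_commute)
  finally show ?thesis unfolding 3 .
qed

lemma sq_ne_triv:
  fixes D :: "'a::{field,finite} \<Rightarrow> complex"
  assumes odd: "odd CHAR('a)" and D: "mult_char D" and Dn: "D \<noteq> triv_char" and Dq: "D \<noteq> quad_char"
  shows "(\<lambda>z. D z * D z) \<noteq> triv_char"
proof
  assume h: "(\<lambda>z. D z * D z) = triv_char"
  have sq1: "D z * D z = 1" if "z \<noteq> 0" for z using fun_cong[OF h, of z] that by (simp add: triv_char_def)
  obtain n where n: "n \<noteq> 0" "D n \<noteq> 1" using mc_triv_iff[OF D Dn] by blast
  have Dn1: "D n = -1"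
  proof -
    have "(D n - 1) * (D n + 1) = 0" using sq1[OF n(1)] by (simp add: algebra_simps)
    hence "D n - 1 = 0 \<or> D n + 1 = 0" by simp
    hence "D n + 1 = 0" using n(2) by simp
    thus ?thesis by (simp add: eq_neg_iff_add_eq_0)
  qed
  have nsq: "\<not> (\<exists>y. y^2 = n)"
  proof
    assume "\<exists>y. y^2 = n"
    then obtain y where "y^2 = n" by blast
    hence "D n = D y * D y" by (simp add: power2_eq_square mc_mult[OF D, symmetric])
    also have "\<dots> = 1" using sq1 \<open>y^2 = n\<close> n(1) by fastforce
    finally show False using n(2) by simp
  qed
  have "quad_char = D"
  proof (rule mc_eqI[OF mc_quad[OF odd] D])
    fix z :: 'a assume z: "z \<noteq> 0"
    show "quad_char z = D z"
    proof (cases "\<exists>y. y^2 = z")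
      case True
      then obtain y where y: "y^2 = z" by blast
      hence "D z = D y * D y" by (simp add: power2_eq_square mc_mult[OF D, symmetric])
      also have "\<dots> = 1" using sq1 y z by fastforce
      finally show ?thesis using True z by (simp add: quad_char_def)
    next
      case False
      obtain y where y: "y^2 = z * n" using nonsq_mult_nonsq[OF odd z False n(1) nsq] by blast
      have zn: "z * n \<noteq> 0" using z n(1) by simp
      hence "D (z * n) = 1"
      proof -
        have "D (z * n) = D y * D y" using y by (simp add: power2_eq_square mc_mult[OF D, symmetric])
        also have "\<dots> = 1" using sq1 y zn by (metis power_zero_numeral)
        finally show ?thesis .
      qed
      hence "D z * D n = 1" by (simp add: mc_mult[OF D])
      hence "D z = -1" using Dn1 by (metis equation_minus_iff mult.right_neutral mult_minus_right)
      thus ?thesis using False z by (simp add: quad_char_def)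
    qed
  qed
  thus False using Dq by simp
qed

lemma jacobi_nz2:
  fixes A B :: "'a::{field,finite} \<Rightarrow> complex"
  assumes odd: "odd CHAR('a)" and "mult_char A" "mult_char B" "A \<noteq> triv_char \<or> B \<noteq> triv_char"
  shows "jacobi A B \<noteq> 0"
  using assms jacobi_nz[OF odd] jacobi_sym[of A B] by metis

lemma jacobi_triv_left:
  fixes B :: "'a::{field,finite} \<Rightarrow> complex"
  assumes "mult_char B" "B \<noteq> triv_char"
  shows "jacobi triv_char B = -1"
proof -
  have "jacobi triv_char B = (\<Sum>x\<in>UNIV. B x * triv_char (1 - x))"
    by (subst jacobi_sym) (simp add: jacobi_def)
  also have "\<dots> = (\<Sum>x\<in>UNIV. triv_char (1 - x) * B x)" by (simp add: mult.commute)
  also have "\<dots> = (\<Sum>x\<in>UNIV - {1}. B x) + 0"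
  proof -
    have "(\<Sum>x\<in>UNIV. triv_char (1 - x) * B x) = (\<Sum>x\<in>UNIV - {1}. triv_char (1 - x) * B x) + triv_char (1 - 1::'a) * B 1"
      by (rule sum_remove1)
    also have "(\<Sum>x\<in>UNIV - {1}. triv_char (1 - x) * B x) = (\<Sum>x\<in>UNIV - {1}. B x)"
      by (rule sum.cong) (auto simp: triv_char_def)
    finally show ?thesis by (simp add: triv_char_def)
  qed
  also have "(\<Sum>x\<in>UNIV - {1}. B x) = (\<Sum>x\<in>UNIV. B x) - B 1"
    using sum_remove1[of B 1] by simp
  finally show ?thesis using mc_sum_zero[OF assms] mc_1[OF assms(1)] by simp
qed

lemma exists_nonsq:
  assumes odd: "odd CHAR('a::{field,finite})" shows "\<exists>n::'a. n \<noteq> 0 \<and> \<not>(\<exists>y. y^2 = n)"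
proof -
  have "\<exists>y::'a. y^2 = 1" by (rule exI[of _ 1]) simp
  hence "(1::'a) \<in> {w::'a. w \<noteq> 0 \<and> (\<exists>y. y^2 = w)}" by simp
  hence "{w::'a. w \<noteq> 0 \<and> (\<exists>y. y^2 = w)} \<noteq> {}" by blast
  hence "card {w::'a. w \<noteq> 0 \<and> (\<exists>y. y^2 = w)} \<noteq> 0" by (simp add: card_eq_0_iff)
  hence "card {w::'a. w \<noteq> 0 \<and> \<not>(\<exists>y. y^2 = w)} \<noteq> 0" using card_squares[OF odd] by simp
  hence "{w::'a. w \<noteq> 0 \<and> \<not>(\<exists>y. y^2 = w)} \<noteq> {}" by auto
  thus ?thesis by auto
qed

lemma quad_ne_triv: "odd CHAR('a::{field,finite}) \<Longrightarrow> (quad_char :: 'a \<Rightarrow> complex) \<noteq> triv_char"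
proof
  assume odd: "odd CHAR('a)" and h: "(quad_char :: 'a \<Rightarrow> complex) = triv_char"
  obtain n :: 'a where "n \<noteq> 0" "\<not>(\<exists>y. y^2 = n)" using exists_nonsq[OF odd] by blast
  hence "quad_char n = -1" by (simp add: quad_char_def)
  moreover have "quad_char n = triv_char n" using h by simp
  ultimately show False using \<open>n \<noteq> 0\<close> by (simp add: triv_char_def)
qed

lemma sum_quad_zero: "odd CHAR('a::{field,finite}) \<Longrightarrow> (\<Sum>x\<in>UNIV. quad_char (x::'a)) = 0"
  by (rule mc_sum_zero[OF mc_quad quad_ne_triv])


lemma sum_triv_mult:
  fixes g :: "'a::{field,finite} \<Rightarrow> complex"
  shows "(\<Sum>Y\<in>UNIV. triv_char Y * g Y) = (\<Sum>Y\<in>UNIV. g Y) - g 0"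
proof -
  have "(\<Sum>Y\<in>UNIV. triv_char Y * g Y) = (\<Sum>Y\<in>UNIV. g Y - (if Y = 0 then g Y else 0))"
    by (rule sum.cong) (auto simp: triv_char_def)
  also have "\<dots> = (\<Sum>Y\<in>UNIV. g Y) - g 0" by (simp add: sum_subtractf)
  finally show ?thesis .
qed

lemma triv_W:
  fixes x m :: "'a::{field,finite}"
  assumes odd: "odd CHAR('a)" and x0: "x \<noteq> 0" and x1: "x \<noteq> 1" and xm1: "1 + x \<noteq> 0" and m0: "m \<noteq> 0"
  defines "t \<equiv> -4*x/(1-x)^2"
  shows "(\<Sum>Y\<in>UNIV. triv_char Y * triv_char ((1-m) - (1 - m*t)*Y) * (cnj (triv_char (1 - t*Y)) * quad_char (1 - t*Y)))
       = - (\<Sum>y\<in>{y. (1-y)*(1-x*y) = m}. triv_char y * triv_char y)"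
proof -
  have u0: "1 - x \<noteq> 0" using x1 by simp
  have u2: "(1-x)^2 \<noteq> 0" using u0 by simp
  have t0: "t \<noteq> 0" using x0 u0 four_nz[OF odd] by (simp add: t_def)
  have gam: "1 - t = ((1+x)/(1-x))^2" unfolding t_def using u2 by (simp add: field_simps) algebra
  have g0: "1 - t \<noteq> 0" using gam xm1 u0 by simp
  have qg: "quad_char (1 - t) = 1" unfolding gam by (rule quad_char_sq) (use xm1 u0 in simp)
  have q1: "quad_char (1::'a) = 1" by (rule mc_1[OF mc_quad[OF odd]])
  have q0: "quad_char (0::'a) = 0" by (simp add: quad_char_def)
  let ?\<alpha> = "1 - m" and ?\<beta> = "1 - m*t"
  let ?Ys = "{y. (1-y)*(1-x*y) = m}"
  have cq: "cnj (triv_char z) * quad_char z = quad_char z" for z :: 'a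
    by (simp add: triv_char_def quad_char_def)
  have L0: "(\<Sum>Y\<in>UNIV. triv_char Y * triv_char ((1-m) - (1 - m*t)*Y) * (cnj (triv_char (1 - t*Y)) * quad_char (1 - t*Y)))
      = (\<Sum>Y\<in>UNIV. triv_char Y * (triv_char (?\<alpha> - ?\<beta>*Y) * quad_char (1 - t*Y)))"
    by (rule sum.cong[OF refl]) (simp only: cq mult.assoc)
  have sphi: "(\<Sum>Y\<in>UNIV. quad_char (1 - t*Y)) = 0"
    using sum_reindex_affine[of "- t" quad_char 1] t0 sum_quad_zero[OF odd] by simp
  have cardY: "of_nat (card ?Ys) = 1 + quad_char ?\<beta>"
  proof -
    have "card ?Ys = card {\<sigma>. \<sigma>^2 = (1 - m*(-4*x/(1-x)^2))*(1 - (-4*x/(1-x)^2))}"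
      by (rule bij_betw_same_card[OF root_bij[OF odd x0 x1 xm1]])
    hence "of_nat (card ?Ys) = 1 + quad_char (?\<beta> * (1 - t))"
      using card_sqrt_complex[OF odd] by (simp add: t_def)
    thus ?thesis using qg by (simp add: quad_char_mult[OF odd])
  qed
  show ?thesis
  proof (cases "m = 1")
    case True
    have "(\<Sum>Y\<in>UNIV. triv_char Y * (triv_char (?\<alpha> - ?\<beta>*Y) * quad_char (1 - t*Y))) = (\<Sum>Y\<in>UNIV. triv_char Y * quad_char (1 - t*Y))"
    proof (rule sum.cong[OF refl])
      fix Y :: 'a
      have "triv_char (?\<alpha> - ?\<beta>*Y) = triv_char Y" using True g0 by (simp add: triv_char_def)
      thus "triv_char Y * (triv_char (?\<alpha> - ?\<beta>*Y) * quad_char (1 - t*Y)) = triv_char Y * quad_char (1 - t*Y)"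
        by (simp add: triv_char_def)
    qed
    also have "\<dots> = -1" using sum_triv_mult[of "\<lambda>Y. quad_char (1 - t*Y)"] sphi by (simp add: q1)
    finally have L: "(\<Sum>Y\<in>UNIV. triv_char Y * (triv_char (?\<alpha> - ?\<beta>*Y) * quad_char (1 - t*Y))) = -1" .
    have Yset: "?Ys = {0, (1+x)/x}"
    proof (intro set_eqI iffI)
      fix y assume "y \<in> ?Ys"
      hence "y * (x*y - (1+x)) = 0" using True by (simp add: algebra_simps)
      hence "y = 0 \<or> x*y = 1+x" by auto
      moreover have "x*y = 1+x \<Longrightarrow> y = (1+x)/x" using x0 by (simp add: eq_divide_eq ac_simps)
      ultimately show "y \<in> {0, (1+x)/x}" by auto
    next
      fix y assume "y \<in> {0, (1+x)/x}"
      hence "y = 0 \<or> y = (1+x)/x" by simp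
      thus "y \<in> ?Ys"
      proof
        assume "y = 0" thus ?thesis using True by simp
      next
        assume "y = (1+x)/x"
        hence xy: "x*y = 1 + x" using x0 by simp
        have "(1-y)*(1-x*y) = (1-y)*(-x)" using xy by simp
        also have "\<dots> = x*y - x" by (simp add: algebra_simps)
        also have "\<dots> = 1" using xy by simp
        finally show ?thesis using True by simp
      qed
    qed
    have n0: "(1+x)/x \<noteq> 0" using x0 xm1 by simp
    have "(\<Sum>y\<in>?Ys. triv_char y * triv_char y) = 1" unfolding Yset using n0 by (simp add: triv_char_def)
    thus ?thesis using L L0 by simp
  next
    case m1: False
    have a0: "?\<alpha> \<noteq> 0" using m1 by simp
    have notin: "0 \<notin> ?Ys" using m1 by simp
    have RY: "(\<Sum>y\<in>?Ys. triv_char y * triv_char y) = 1 + quad_char ?\<beta>"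
    proof -
      have "(\<Sum>y\<in>?Ys. triv_char y * triv_char y) = (\<Sum>y\<in>?Ys. 1)"
        by (rule sum.cong[OF refl]) (use notin in \<open>auto simp: triv_char_def\<close>)
      thus ?thesis using cardY by simp
    qed
    show ?thesis
    proof (cases "?\<beta> = 0")
      case True
      have "(\<Sum>Y\<in>UNIV. triv_char Y * (triv_char (?\<alpha> - ?\<beta>*Y) * quad_char (1 - t*Y))) = (\<Sum>Y\<in>UNIV. triv_char Y * quad_char (1 - t*Y))"
        using True a0 by (simp add: triv_char_def)
      also have "\<dots> = -1" using sum_triv_mult[of "\<lambda>Y. quad_char (1 - t*Y)"] sphi by (simp add: q1)
      finally show ?thesis using L0 RY True by (simp add: q0)
    next
      case b0: False
      let ?p = "?\<alpha> / ?\<beta>"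
      have p0: "?p \<noteq> 0" using a0 b0 by simp
      have pt: "1 - t * ?p = (1 - t) / ?\<beta>" using b0 by (simp add: field_simps)
      have qp: "quad_char (1 - t * ?p) = quad_char ?\<beta>"
      proof -
        have "quad_char (1 - t * ?p) = quad_char (1 - t) * quad_char (inverse ?\<beta>)"
          unfolding pt by (simp add: divide_inverse quad_char_mult[OF odd])
        also have "\<dots> = quad_char ?\<beta>"
          using qg mc_inverse[OF mc_quad[OF odd], of ?\<beta>] by (simp add: quad_char_cnj)
        finally show ?thesis .
      qed
      have pw: "triv_char Y * triv_char (?\<alpha> - ?\<beta>*Y) = 1 - (if Y = 0 then 1 else 0) - (if Y = ?p then 1 else 0)" for Y
      proof -
        have "?\<alpha> - ?\<beta>*Y = 0 \<longleftrightarrow> Y = ?p" using b0 by (auto simp: field_simps)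
        thus ?thesis using p0 by (auto simp: triv_char_def)
      qed
      have "(\<Sum>Y\<in>UNIV. triv_char Y * (triv_char (?\<alpha> - ?\<beta>*Y) * quad_char (1 - t*Y)))
          = (\<Sum>Y\<in>UNIV. quad_char (1 - t*Y) - (if Y = 0 then quad_char (1 - t*Y) else 0) - (if Y = ?p then quad_char (1 - t*Y) else 0))"
        by (rule sum.cong[OF refl]) (simp only: mult.assoc[symmetric] pw, simp add: algebra_simps)
      also have "\<dots> = (\<Sum>Y\<in>UNIV. quad_char (1 - t*Y)) - quad_char (1::'a) - quad_char (1 - t * ?p)"
        by (simp add: sum_subtractf)
      also have "\<dots> = - (1 + quad_char ?\<beta>)" using sphi qp by (simp add: q1)
      finally show ?thesis using L0 RY by simp
    qed
  qed
qed

lemma KEY1: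
  fixes B D :: "'a::{field,finite} \<Rightarrow> complex" and t :: 'a
  assumes D: "mult_char D" and B: "mult_char B" and BD: "B \<noteq> D"
  shows "jacobi D (\<lambda>z. cnj (B z)) * (\<Sum>Y\<in>UNIV. D Y * (D (1-Y) * cnj (B (1-Y))) * (cnj (D (1 - t*Y)) * quad_char (1 - t*Y) * B (1 - t*Y)))
       = (\<Sum>m\<in>UNIV. cnj (B m) * (\<Sum>Y\<in>UNIV. D Y * D ((1-m) - (1 - m*t)*Y) * (cnj (D (1 - t*Y)) * quad_char (1 - t*Y))))"
proof -
  let ?L = "\<lambda>Y. D Y * (D (1-Y) * cnj (B (1-Y))) * (cnj (D (1 - t*Y)) * quad_char (1 - t*Y) * B (1 - t*Y))"
  let ?W = "\<lambda>m Y. D Y * D ((1-m) - (1 - m*t)*Y) * (cnj (D (1 - t*Y)) * quad_char (1 - t*Y))"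
  have "jacobi D (\<lambda>z. cnj (B z)) * (\<Sum>Y\<in>UNIV. ?L Y) = (\<Sum>Z\<in>UNIV. \<Sum>Y\<in>UNIV. D Z * cnj (B (1 - Z)) * ?L Y)"
    unfolding jacobi_def by (rule sum_product)
  also have "\<dots> = (\<Sum>Y\<in>UNIV. \<Sum>Z\<in>UNIV. D Z * cnj (B (1 - Z)) * ?L Y)"
    by (rule sum.swap)
  also have "\<dots> = (\<Sum>Y\<in>UNIV. \<Sum>m\<in>UNIV. cnj (B m) * ?W m Y)"
    by (rule sum.cong[OF refl], rule key_inner[OF D B BD])
  also have "\<dots> = (\<Sum>m\<in>UNIV. cnj (B m) * (\<Sum>Y\<in>UNIV. ?W m Y))"
    by (subst sum.swap) (simp add: sum_distrib_left)
  finally show ?thesis .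
qed

lemma KEY3:
  fixes B D :: "'a::{field,finite} \<Rightarrow> complex" and x :: 'a
  assumes B: "mult_char B"
  shows "(\<Sum>y\<in>UNIV. D y * D y * (cnj (B (1-y)) * cnj (B (1-x*y))))
      = (\<Sum>m\<in>UNIV. cnj (B m) * (\<Sum>y\<in>{y. (1-y)*(1-x*y) = m}. D y * D y))"
proof -
  have "(\<Sum>y\<in>UNIV. D y * D y * (cnj (B (1-y)) * cnj (B (1-x*y))))
      = (\<Sum>y\<in>UNIV. D y * D y * cnj (B ((1-y)*(1-x*y))))"
    by (simp add: mc_mult[OF B])
  also have "\<dots> = (\<Sum>m\<in>UNIV. \<Sum>y\<in>{y. y \<in> UNIV \<and> (1-y)*(1-x*y) = m}. D y * D y * cnj (B ((1-y)*(1-x*y))))"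
    by (rule sum.group[symmetric]) auto
  also have "\<dots> = (\<Sum>m\<in>UNIV. cnj (B m) * (\<Sum>y\<in>{y. (1-y)*(1-x*y) = m}. D y * D y))"
    by (rule sum.cong[OF refl]) (simp add: sum_distrib_left ac_simps)
  finally show ?thesis .
qed

lemma triv_case:
  fixes B :: "'a::{field,finite} \<Rightarrow> complex" and x :: 'a
  assumes odd: "odd CHAR('a)" and B: "mult_char B" and Bn: "B \<noteq> triv_char"
    and x0: "x \<noteq> 0" and x1: "x \<noteq> 1" and xm1: "1 + x \<noteq> 0"
  defines "t \<equiv> -4*x/(1-x)^2"
  shows "(\<Sum>Y\<in>UNIV. triv_char Y * (triv_char (1-Y) * cnj (B (1-Y))) * (cnj (triv_char (1 - t*Y)) * quad_char (1 - t*Y) * B (1 - t*Y)))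
       = (\<Sum>y\<in>UNIV. triv_char y * triv_char y * (cnj (B (1-y)) * cnj (B (1-x*y))))"
proof -
  have Bc: "mult_char (\<lambda>z. cnj (B z))" by (rule mc_conj[OF B])
  have Bcn: "(\<lambda>z. cnj (B z)) \<noteq> triv_char" by (rule mc_conj_ne_triv[OF B Bn])
  have J: "jacobi triv_char (\<lambda>z. cnj (B z)) = -1" by (rule jacobi_triv_left[OF Bc Bcn])
  have "- (\<Sum>Y\<in>UNIV. triv_char Y * (triv_char (1-Y) * cnj (B (1-Y))) * (cnj (triv_char (1 - t*Y)) * quad_char (1 - t*Y) * B (1 - t*Y)))
      = (\<Sum>m\<in>UNIV. cnj (B m) * (\<Sum>Y\<in>UNIV. triv_char Y * triv_char ((1-m) - (1 - m*t)*Y) * (cnj (triv_char (1 - t*Y)) * quad_char (1 - t*Y))))"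
    using KEY1[OF mc_triv B Bn, of t] J by simp
  also have "\<dots> = (\<Sum>m\<in>UNIV. cnj (B m) * (- (\<Sum>y\<in>{y. (1-y)*(1-x*y) = m}. triv_char y * triv_char y)))"
  proof (rule sum.cong[OF refl])
    fix m :: 'a
    show "cnj (B m) * (\<Sum>Y\<in>UNIV. triv_char Y * triv_char ((1-m) - (1 - m*t)*Y) * (cnj (triv_char (1 - t*Y)) * quad_char (1 - t*Y)))
        = cnj (B m) * (- (\<Sum>y\<in>{y. (1-y)*(1-x*y) = m}. triv_char y * triv_char y))"
    proof (cases "m = 0")
      case True thus ?thesis using mc_0[OF B] by simp
    next
      case False
      show ?thesis unfolding t_def triv_W[OF odd x0 x1 xm1 False] ..
    qed
  qed
  also have "\<dots> = - (\<Sum>y\<in>UNIV. triv_char y * triv_char y * (cnj (B (1-y)) * cnj (B (1-x*y))))"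
    unfolding KEY3[OF B] by (simp add: sum_negf)
  finally show ?thesis by simp
qed

theorem mainTheorem7:
  fixes B D :: "'a::{field,finite} \<Rightarrow> complex" and x :: 'a
  assumes "odd CHAR('a)"
    and "mult_char B" and "mult_char D"
    and "D \<noteq> quad_char" and "B \<noteq> D"
  defines "C \<equiv> char_mult D D"
  shows "(if x = 1 then 0 else
            char_conj C (1 - x) *
            F21 (char_mult (char_mult D quad_char) (char_conj B)) D (char_mult C (char_conj B))
                (- 4 * x / (1 - x) ^ 2))
       = F21 B C (char_mult C (char_conj B)) x
         - kdelta (1 - x) * jacobi C (char_mult (char_conj B) (char_conj B)) / jacobi C (char_conj B)
         - kdelta (1 + x) * jacobi (char_conj B) (char_mult D quad_char) / jacobi C (char_conj B)"
proof -
  have odd: "odd CHAR('a)" and B: "mult_char B" and D: "mult_char D" and Dq: "D \<noteq> quad_char" and BD: "B \<noteq> D"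
    using assms by auto
  have two: "(2::'a) \<noteq> 0" by (rule two_nz[OF odd])
  have Ceq: "C = (\<lambda>z. D z * D z)" unfolding C_def char_mult_def by simp
  have Bc: "mult_char (\<lambda>z. cnj (B z))" by (rule mc_conj[OF B])
  have CBeq: "char_conj B = (\<lambda>z. cnj (B z))" by (simp add: char_conj_def fun_eq_iff)
  let ?AL = "char_mult (char_mult D quad_char) (char_conj B)"
  let ?CB = "char_mult C (char_conj B)"
  have F1: "char_mult (char_conj D) ?CB = (\<lambda>z. D z * cnj (B z))"
  proof
    fix z :: 'a
    show "char_mult (char_conj D) ?CB z = D z * cnj (B z)"
    proof (cases "z = 0")
      case True thus ?thesis using mc_0[OF D] by (simp add: char_mult_def char_conj_def Ceq)
    next
      case False
      have "char_mult (char_conj D) ?CB z = (cnj (D z) * D z) * (D z * cnj (B z))"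
        by (simp add: char_mult_def char_conj_def Ceq ac_simps)
      thus ?thesis using mc_cnj_mult[OF D False] by simp
    qed
  qed
  have F2: "char_conj ?AL = (\<lambda>z. cnj (D z) * quad_char z * B z)"
    by (simp add: char_mult_def char_conj_def quad_char_cnj fun_eq_iff)
  have F3: "char_mult (char_conj C) ?CB = (\<lambda>z. cnj (B z))"
  proof
    fix z :: 'a
    show "char_mult (char_conj C) ?CB z = cnj (B z)"
    proof (cases "z = 0")
      case True thus ?thesis using mc_0[OF B] by (simp add: char_mult_def char_conj_def)
    next
      case False
      have c: "cnj (C z) * C z = 1" unfolding Ceq using mc_cnj_mult[OF D False]
        by (simp add: ac_simps)
      have "char_mult (char_conj C) ?CB z = (cnj (C z) * C z) * cnj (B z)"
        by (simp add: char_mult_def char_conj_def ac_simps)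
      thus ?thesis using c by simp
    qed
  qed
  have F4: "char_mult ?CB (char_conj C) = (\<lambda>z. cnj (B z))"
    using F3 by (simp add: char_mult_def fun_eq_iff ac_simps)
  have F5: "char_mult ?CB (char_conj D) = (\<lambda>z. D z * cnj (B z))"
    using F1 by (simp add: char_mult_def fun_eq_iff ac_simps)
  have PL: "P21 ?AL D ?CB t = (\<Sum>Y\<in>UNIV. D Y * (D (1-Y) * cnj (B (1-Y))) * (cnj (D (1 - t*Y)) * quad_char (1 - t*Y) * B (1 - t*Y)))" for t
    unfolding P21_def F1 F2 by simp
  have PR: "P21 B C ?CB x = (\<Sum>y\<in>UNIV. D y * D y * (cnj (B (1-y)) * cnj (B (1-x*y))))"
    unfolding P21_def F3 by (simp add: Ceq char_conj_def mult.assoc)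
  have FL: "F21 ?AL D ?CB t = P21 ?AL D ?CB t / jacobi D (\<lambda>z. D z * cnj (B z))" for t
    unfolding F21_def F5 ..
  have FR: "F21 B C ?CB x = P21 B C ?CB x / jacobi C (\<lambda>z. cnj (B z))"
    unfolding F21_def F4 ..
  have DBn: "(\<lambda>z. D z * cnj (B z)) \<noteq> triv_char" by (rule mc_ne_triv[OF D B BD])
  have J1nz: "jacobi D (\<lambda>z. D z * cnj (B z)) \<noteq> 0"
    by (rule jacobi_nz2[OF odd D mc_prod[OF D Bc]]) (use DBn in simp)
  have J2nz: "jacobi C (\<lambda>z. cnj (B z)) \<noteq> 0"
  proof (cases "B = triv_char")
    case True
    hence Dn: "D \<noteq> triv_char" using BD by simp
    have "C \<noteq> triv_char" unfolding Ceq by (rule sq_ne_triv[OF odd D Dn Dq])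
    thus ?thesis unfolding Ceq by (intro jacobi_nz2[OF odd mc_prod[OF D D] Bc]) (simp add: Ceq)
  next
    case False
    have "(\<lambda>z. cnj (B z)) \<noteq> triv_char" by (rule mc_conj_ne_triv[OF B False])
    thus ?thesis unfolding Ceq by (intro jacobi_nz2[OF odd mc_prod[OF D D] Bc]) simp
  qed
  have kd0: "kdelta (z::'a) = 0" if "z \<noteq> 0" for z using that by (simp add: kdelta_def)
  have kd1: "kdelta (0::'a) = 1" by (simp add: kdelta_def)
  show ?thesis
  proof (cases "x = 1")
    case True
    have P1: "P21 B C ?CB x = jacobi C (char_mult (char_conj B) (char_conj B))"
      unfolding PR using True by (simp add: jacobi_def Ceq char_mult_def char_conj_def)
    have Fx: "F21 B C ?CB x = jacobi C (char_mult (char_conj B) (char_conj B)) / jacobi C (char_conj B)"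
      using FR P1 by (simp add: CBeq)
    have k1: "kdelta (1 + x) = 0" using True two by (simp add: kdelta_def)
    have k2: "kdelta (1 - x) = 1" using True by (simp add: kdelta_def)
    show ?thesis unfolding Fx k1 k2 using True by simp
  next
    case x1: False
    have u0: "1 - x \<noteq> 0" using x1 by simp
    have cC: "char_conj C (1 - x) = cnj (D (1-x)) * cnj (D (1-x))" by (simp add: char_conj_def Ceq)
    have LHS: "(if x = 1 then 0 else
            char_conj C (1 - x) * F21 ?AL D ?CB (- 4 * x / (1 - x) ^ 2))
        = cnj (D (1-x)) * cnj (D (1-x)) * (P21 ?AL D ?CB (- 4 * x / (1 - x) ^ 2) / jacobi D (\<lambda>z. D z * cnj (B z)))"
      using x1 by (simp add: cC FL)
    have J2eq: "jacobi C (char_conj B) = jacobi C (\<lambda>z. cnj (B z))" by (simp add: CBeq)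
    have Jbd: "jacobi (char_conj B) (char_mult D quad_char) = jacobi (\<lambda>z. D z * quad_char z) (\<lambda>z. cnj (B z))"
      by (subst jacobi_sym) (simp add: CBeq char_mult_def[abs_def])
    show ?thesis
    proof (cases "x = 0")
      case True
      have P0: "P21 ?AL D ?CB (- 4 * x / (1 - x) ^ 2) = jacobi D (\<lambda>z. D z * cnj (B z))"
        unfolding PL jacobi_def using True mc_1[OF D] mc_1[OF B] mc_1[OF mc_quad[OF odd]] by (simp add: mult.assoc)
      have P1: "P21 B C ?CB x = jacobi C (\<lambda>z. cnj (B z))"
        unfolding PR jacobi_def using True mc_1[OF B] by (simp add: Ceq mult.assoc)
      have k: "kdelta (1 - x) = 0" "kdelta (1 + x) = 0" using True by (simp_all add: kdelta_def)
      show ?thesis unfolding LHS FR P0 P1 k J2eq using True J1nz J2nz mc_1[OF D] by simp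
    next
      case x0: False
      show ?thesis
      proof (cases "x = -1")
        case True
        have four: "(4::'a) \<noteq> 0" by (rule four_nz[OF odd])
        have t1: "- 4 * x / (1 - x) ^ 2 = 1"
        proof -
          have "(1 - x)^2 = 4" using True by (simp add: power2_eq_square)
          thus ?thesis using True four by simp
        qed
        have PLm: "P21 ?AL D ?CB (- 4 * x / (1 - x) ^ 2) = jacobi D quad_char"
          unfolding t1 PL jacobi_def
        proof (rule sum.cong[OF refl])
          fix Y :: 'a
          show "D Y * (D (1-Y) * cnj (B (1-Y))) * (cnj (D (1 - 1*Y)) * quad_char (1 - 1*Y) * B (1 - 1*Y)) = D Y * quad_char (1 - Y)"
          proof (cases "1 - Y = 0")
            case True thus ?thesis using mc_0[OF D] by (simp add: quad_char_def)
          next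
            case False
            have "D Y * (D (1-Y) * cnj (B (1-Y))) * (cnj (D (1 - 1*Y)) * quad_char (1 - 1*Y) * B (1 - 1*Y))
                = D Y * quad_char (1 - Y) * (cnj (D (1-Y)) * D (1-Y)) * (cnj (B (1-Y)) * B (1-Y))"
              by (simp add: ac_simps)
            thus ?thesis using mc_cnj_mult[OF D False] mc_cnj_mult[OF B False] by simp
          qed
        qed
        have PRm: "P21 B C ?CB x = jacobi (\<lambda>w. D w * quad_char w) (\<lambda>z. cnj (B z)) + jacobi D (\<lambda>z. cnj (B z))"
        proof -
          have "P21 B C ?CB x = (\<Sum>y\<in>UNIV. D (y^2) * cnj (B (1 - y^2)))"
            unfolding PR
          proof (rule sum.cong[OF refl])
            fix y :: 'a
            have "(1 - y) * (1 - x * y) = 1 - y^2" using True by (simp add: power2_eq_square algebra_simps)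
            hence "cnj (B (1-y)) * cnj (B (1-x*y)) = cnj (B (1 - y^2))" using mc_mult[OF B, of "1-y" "1-x*y"] by simp
            moreover have "D y * D y = D (y^2)" by (simp add: power2_eq_square mc_mult[OF D])
            ultimately show "D y * D y * (cnj (B (1-y)) * cnj (B (1-x*y))) = D (y^2) * cnj (B (1 - y^2))" by simp
          qed
          also have "\<dots> = (\<Sum>w\<in>UNIV. quad_char w * (D w * cnj (B (1 - w)))) + (\<Sum>w\<in>UNIV. D w * cnj (B (1 - w)))"
            using sum_quad[OF odd, of "\<lambda>w. D w * cnj (B (1 - w))"] by simp
          finally show ?thesis by (simp add: jacobi_def ac_simps)
        qed
        have k: "kdelta (1 - x) = 0" "kdelta (1 + x) = 1" using True two by (simp_all add: kdelta_def)
        have RHS: "F21 B C ?CB x - kdelta (1 - x) * jacobi C (char_mult (char_conj B) (char_conj B)) / jacobi C (char_conj B)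
            - kdelta (1 + x) * jacobi (char_conj B) (char_mult D quad_char) / jacobi C (char_conj B)
            = jacobi D (\<lambda>z. cnj (B z)) / jacobi C (\<lambda>z. cnj (B z))"
          unfolding FR PRm k J2eq Jbd by (simp add: diff_divide_distrib add_divide_distrib)
        have c2: "cnj (D (1-x)) * cnj (D (1-x)) = cnj (D 2) * cnj (D 2)" using True by simp
        have main: "cnj (D 2) * cnj (D 2) * (jacobi D quad_char / jacobi D (\<lambda>z. D z * cnj (B z)))
            = jacobi D (\<lambda>z. cnj (B z)) / jacobi C (\<lambda>z. cnj (B z))"
        proof (cases "D = triv_char")
          case Dt: True
          have Bn: "B \<noteq> triv_char" using BD Dt by simp
          have Bcn: "(\<lambda>z. cnj (B z)) \<noteq> triv_char" by (rule mc_conj_ne_triv[OF B Bn])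
          have Ct: "C = triv_char" unfolding Ceq Dt by (auto simp: triv_char_def)
          have e1: "(\<lambda>z. D z * cnj (B z)) = (\<lambda>z. cnj (B z))" unfolding Dt
            using mc_0[OF B] by (auto simp: triv_char_def fun_eq_iff)
          have jq: "jacobi D quad_char = -1" unfolding Dt by (rule jacobi_triv_left[OF mc_quad[OF odd] quad_ne_triv[OF odd]])
          have jb: "jacobi triv_char (\<lambda>z. cnj (B z)) = -1" by (rule jacobi_triv_left[OF Bc Bcn])
          have "cnj (D 2) = 1" using Dt two by (simp add: triv_char_def)
          thus ?thesis unfolding e1 Ct jq using jb Dt by simp
        next
          case Dn: False
          have Cn: "(\<lambda>z. D z * D z) \<noteq> triv_char" by (rule sq_ne_triv[OF odd D Dn Dq])
          have dup: "jacobi D quad_char = D 4 * jacobi D D"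
            using jacobi_dup[OF odd D Dn] jacobi_sym[of D quad_char] by simp
          have d4: "cnj (D 2) * cnj (D 2) * D 4 = 1"
          proof -
            have "(4::'a) = 2 * 2" by simp
            hence "D 4 = D 2 * D 2" by (simp add: mc_mult[OF D, symmetric])
            thus ?thesis using mc_cnj_mult[OF D two] by (simp add: ac_simps)
          qed
          have assoc: "jacobi D D * jacobi (\<lambda>z. D z * D z) (\<lambda>z. cnj (B z)) = jacobi D (\<lambda>z. D z * cnj (B z)) * jacobi D (\<lambda>z. cnj (B z))"
            by (rule jacobi_assoc[OF D D Bc Cn DBn])
          have J2nz': "jacobi (\<lambda>z. D z * D z) (\<lambda>z. cnj (B z)) \<noteq> 0" using J2nz by (simp add: Ceq)
          have "cnj (D 2) * cnj (D 2) * (jacobi D quad_char / jacobi D (\<lambda>z. D z * cnj (B z)))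
              = jacobi D D / jacobi D (\<lambda>z. D z * cnj (B z))"
            unfolding dup using d4 by (simp add: ac_simps)
          also have "\<dots> = jacobi D (\<lambda>z. cnj (B z)) / jacobi (\<lambda>z. D z * D z) (\<lambda>z. cnj (B z))"
            using assoc J1nz J2nz' by (simp add: divide_eq_eq eq_divide_eq ac_simps)
          finally show ?thesis unfolding Ceq .
        qed
        show ?thesis unfolding LHS RHS PLm c2 by (rule main)
      next
        case xm1: False
        have v0: "1 + x \<noteq> 0" using xm1 by (simp add: add_eq_0_iff)
        have k: "kdelta (1 - x) = 0" "kdelta (1 + x) = 0" using u0 v0 by (simp_all add: kdelta_def)
        have RHS: "F21 B C ?CB x - kdelta (1 - x) * jacobi C (char_mult (char_conj B) (char_conj B)) / jacobi C (char_conj B)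
            - kdelta (1 + x) * jacobi (char_conj B) (char_mult D quad_char) / jacobi C (char_conj B)
            = P21 B C ?CB x / jacobi C (\<lambda>z. cnj (B z))"
          unfolding FR k J2eq by simp
        have main: "cnj (D (1-x)) * cnj (D (1-x)) * (P21 ?AL D ?CB (- 4 * x / (1 - x) ^ 2) / jacobi D (\<lambda>z. D z * cnj (B z)))
            = P21 B C ?CB x / jacobi C (\<lambda>z. cnj (B z))"
        proof (cases "D = triv_char")
          case Dt: True
          have Bn: "B \<noteq> triv_char" using BD Dt by simp
          have Bcn: "(\<lambda>z. cnj (B z)) \<noteq> triv_char" by (rule mc_conj_ne_triv[OF B Bn])
          have Ct: "C = triv_char" unfolding Ceq Dt by (auto simp: triv_char_def)
          have e1: "(\<lambda>z. D z * cnj (B z)) = (\<lambda>z. cnj (B z))" unfolding Dt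
            using mc_0[OF B] by (auto simp: triv_char_def fun_eq_iff)
          have jb: "jacobi triv_char (\<lambda>z. cnj (B z)) = -1" by (rule jacobi_triv_left[OF Bc Bcn])
          have cu: "cnj (D (1-x)) = 1" using Dt u0 by (simp add: triv_char_def)
          have eq: "P21 ?AL D ?CB (- 4 * x / (1 - x) ^ 2) = P21 B C ?CB x"
            unfolding PL PR unfolding Dt by (rule triv_case[OF odd B Bn x0 x1 v0])
          have J1t: "jacobi D (\<lambda>z. D z * cnj (B z)) = -1" by (subst e1) (simp add: Dt jb)
          have J2t: "jacobi C (\<lambda>z. cnj (B z)) = -1" unfolding Ct by (rule jb)
          show ?thesis unfolding cu eq J1t J2t by simp
        next
          case Dn: False
          have Cn: "(\<lambda>z. D z * D z) \<noteq> triv_char" by (rule sq_ne_triv[OF odd D Dn Dq])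
          have J3nz: "jacobi D (\<lambda>z. cnj (B z)) \<noteq> 0" by (rule jacobi_nz[OF odd D Bc Dn])
          have assoc: "jacobi D D * jacobi (\<lambda>z. D z * D z) (\<lambda>z. cnj (B z)) = jacobi D (\<lambda>z. D z * cnj (B z)) * jacobi D (\<lambda>z. cnj (B z))"
            by (rule jacobi_assoc[OF D D Bc Cn DBn])
          have J2nz': "jacobi (\<lambda>z. D z * D z) (\<lambda>z. cnj (B z)) \<noteq> 0" using J2nz by (simp add: Ceq)
          have key: "jacobi D (\<lambda>z. cnj (B z)) * (cnj (D (1-x)) * cnj (D (1-x))) * P21 ?AL D ?CB (- 4 * x / (1 - x) ^ 2)
              = jacobi D D * P21 B C ?CB x"
            unfolding PL PR by (rule KEY[OF odd D B Dn Dq BD x0 x1 v0])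
          define cu where "cu = cnj (D (1-x)) * cnj (D (1-x))"
          define PLv where "PLv = P21 ?AL D ?CB (- 4 * x / (1 - x) ^ 2)"
          define PRv where "PRv = P21 B C ?CB x"
          define J0 where "J0 = jacobi D D"
          define J1 where "J1 = jacobi D (\<lambda>z. D z * cnj (B z))"
          define J2 where "J2 = jacobi (\<lambda>z. D z * D z) (\<lambda>z. cnj (B z))"
          define J3 where "J3 = jacobi D (\<lambda>z. cnj (B z))"
          have key': "J3 * cu * PLv = J0 * PRv" using key unfolding J3_def cu_def PLv_def J0_def PRv_def by (simp add: ac_simps)
          have assoc': "J0 * J2 = J1 * J3" using assoc unfolding J0_def J1_def J2_def J3_def .
          have nz: "J1 \<noteq> 0" "J2 \<noteq> 0" "J3 \<noteq> 0" using J1nz J2nz' J3nz unfolding J1_def J2_def J3_def by auto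
          have "cu * PLv * J2 * J3 = PRv * J1 * J3"
          proof -
            have "cu * PLv * J2 * J3 = (J3 * cu * PLv) * J2" by (simp add: ac_simps)
            also have "\<dots> = PRv * (J0 * J2)" unfolding key' by (simp add: ac_simps)
            also have "\<dots> = PRv * J1 * J3" unfolding assoc' by (simp add: ac_simps)
            finally show ?thesis .
          qed
          hence "cu * PLv * J2 = PRv * J1" using nz(3) by simp
          hence "cu * (PLv / J1) = PRv / J2" using nz(1,2) by (simp add: field_simps)
          thus ?thesis unfolding cu_def PLv_def PRv_def J1_def J2_def Ceq .
        qed
        show ?thesis unfolding LHS RHS by (rule main)
      qed
    qed
  qed
qed

end
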